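(* For all $[M],[N]\in\mathrm{Iso}(Q)$, $\Delta([M]\cdot[N])=\Delta([M])\,\Delta([N])$ in $\mathbf H_Q\otimes\mathbf H_Q$. Consequently $\mathbf H_Q$ is a graded, connected, cocommutative bialgebra (hence Hopf algebra).
   Context: Let $Q$ be a quiver and $\mathrm{Rep}(Q,\mathbb{F}_1)$ the category of representations $(V_i,f_h)$ over $\mathbb{F}_1$ (each $V_i$ a finite pointed set, each $f_h:V_{h'}\to V_{h''}$ a pointed map injective off the preimage of the base point); subrepresentations are families of subsets containing the base points and stable under edge maps; quotients collapse the subrepresentation to the base points; direct sums are vertexwise with $V\oplus W=V\sqcup W$ with base points identified. Let $\mathrm{Iso}(Q)$ be the set of isomorphism classes, each with a fixed representative. $\mathbf H_Q$ is the $\mathbb C$-vector space of finitely supported functions $\mathrm{Iso}(Q)\to\mathbb C$, with basis of delta functions $[M]$, product $(f\cdot g)(M)=\sum_{L\subset M}f(M/L)g(L)$ (sum over subrepresentations $L$ of the representative $M$), graded by dimension vector, and coproduct $\Delta(f)([M],[N])=f([M\oplus N])$, i.e. $\Delta([M])=\sum_{(A,B):A\oplus B\cong M}[A]\otimes[B]$. The same definitions apply with $\mathrm{Rep}(Q,\mathbb{F}_1)$ replaced by its full subcategory of nilpotent representations. *)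

theory Defs
  imports Complex_Main
begin

text \<open>A quiver Q is given by a finite type of vertices 'v, a (finite) set E of arrows
  and source and target maps s t :: 'e => 'v.
  A representation over F1 is encoded as a pair (V, f): V i is the finite pointed set at
  vertex i, whose base point is the natural number 0; f h is the pointed map
  V (s h) -> V (t h), extended by 0 outside V (s h).\<close>

type_synonym ('v,'e) rep = "('v \<Rightarrow> nat set) \<times> ('e \<Rightarrow> nat \<Rightarrow> nat)"

definition is_rep :: "'e set \<Rightarrow> ('e \<Rightarrow> 'v) \<Rightarrow> ('e \<Rightarrow> 'v) \<Rightarrow> ('v,'e) rep \<Rightarrow> bool" where
  "is_rep E s t M \<longleftrightarrow>
     (\<forall>i. finite (fst M i) \<and> 0 \<in> fst M i) \<and>
     (\<forall>h. h \<notin> E \<longrightarrow> snd M h = (\<lambda>x. 0)) \<and>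
     (\<forall>h\<in>E. snd M h 0 = 0 \<and> snd M h ` fst M (s h) \<subseteq> fst M (t h) \<and>
          inj_on (snd M h) {x \<in> fst M (s h). snd M h x \<noteq> 0} \<and>
          (\<forall>x. x \<notin> fst M (s h) \<longrightarrow> snd M h x = 0))"

definition rep_iso :: "'e set \<Rightarrow> ('e \<Rightarrow> 'v) \<Rightarrow> ('e \<Rightarrow> 'v) \<Rightarrow> ('v,'e) rep \<Rightarrow> ('v,'e) rep \<Rightarrow> bool" where
  "rep_iso E s t M N \<longleftrightarrow> is_rep E s t M \<and> is_rep E s t N \<and>
     (\<exists>\<phi> :: 'v \<Rightarrow> nat \<Rightarrow> nat.
        (\<forall>i. bij_betw (\<phi> i) (fst M i) (fst N i) \<and> \<phi> i 0 = 0) \<and>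
        (\<forall>h\<in>E. \<forall>x\<in>fst M (s h). \<phi> (t h) (snd M h x) = snd N h (\<phi> (s h) x)))"

definition canon :: "'e set \<Rightarrow> ('e \<Rightarrow> 'v) \<Rightarrow> ('e \<Rightarrow> 'v) \<Rightarrow> ('v,'e) rep \<Rightarrow> ('v,'e) rep" where
  "canon E s t M = (SOME N. rep_iso E s t M N)"

text \<open>Iso(Q), as the set of fixed representatives.\<close>
definition IsoQ :: "'e set \<Rightarrow> ('e \<Rightarrow> 'v) \<Rightarrow> ('e \<Rightarrow> 'v) \<Rightarrow> ('v,'e) rep set" where
  "IsoQ E s t = {canon E s t M | M. is_rep E s t M}"

definition subreps :: "'e set \<Rightarrow> ('e \<Rightarrow> 'v) \<Rightarrow> ('e \<Rightarrow> 'v) \<Rightarrow> ('v,'e) rep \<Rightarrow> ('v \<Rightarrow> nat set) set" where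
  "subreps E s t M = {L. (\<forall>i. 0 \<in> L i \<and> L i \<subseteq> fst M i) \<and> (\<forall>h\<in>E. snd M h ` L (s h) \<subseteq> L (t h))}"

definition subrep :: "('e \<Rightarrow> 'v) \<Rightarrow> ('v,'e) rep \<Rightarrow> ('v \<Rightarrow> nat set) \<Rightarrow> ('v,'e) rep" where
  "subrep s M L = (L, \<lambda>h x. if x \<in> L (s h) then snd M h x else 0)"

definition quot :: "'e set \<Rightarrow> ('e \<Rightarrow> 'v) \<Rightarrow> ('e \<Rightarrow> 'v) \<Rightarrow> ('v,'e) rep \<Rightarrow> ('v \<Rightarrow> nat set) \<Rightarrow> ('v,'e) rep" where
  "quot E s t M L = (\<lambda>i. (fst M i - L i) \<union> {0},
     \<lambda>h x. if x \<in> fst M (s h) - L (s h) \<and> snd M h x \<notin> L (t h) then snd M h x else 0)"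

text \<open>Direct sum: disjoint union with base points identified (left summand on even, right on odd numbers).\<close>
definition enc_l :: "nat \<Rightarrow> nat" where "enc_l n = (if n = 0 then 0 else 2 * n)"
definition enc_r :: "nat \<Rightarrow> nat" where "enc_r n = (if n = 0 then 0 else 2 * n - 1)"

definition dsum :: "('v,'e) rep \<Rightarrow> ('v,'e) rep \<Rightarrow> ('v,'e) rep" where
  "dsum M N = (\<lambda>i. enc_l ` fst M i \<union> enc_r ` fst N i,
     \<lambda>h x. if x = 0 then 0 else if even x then enc_l (snd M h (x div 2))
           else enc_r (snd N h ((x + 1) div 2)))"

definition zrep :: "('v,'e) rep" where "zrep = (\<lambda>i. {0}, \<lambda>h x. 0)"

definition dimv :: "('v,'e) rep \<Rightarrow> 'v \<Rightarrow> nat" where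
  "dimv M = (\<lambda>i. card (fst M i) - 1)"

text \<open>H_Q: finitely supported functions Iso(Q) -> C (as functions vanishing off Iso(Q)).
  H_Q (x) H_Q and H_Q (x) H_Q (x) H_Q are identified with finitely supported functions on
  Iso(Q)^2 and Iso(Q)^3 via the bases of delta functions.\<close>
definition HQ :: "'e set \<Rightarrow> ('e \<Rightarrow> 'v) \<Rightarrow> ('e \<Rightarrow> 'v) \<Rightarrow> (('v,'e) rep \<Rightarrow> complex) set" where
  "HQ E s t = {f. (\<forall>X. f X \<noteq> 0 \<longrightarrow> X \<in> IsoQ E s t) \<and> finite {X. f X \<noteq> 0}}"

definition HQ2 :: "'e set \<Rightarrow> ('e \<Rightarrow> 'v) \<Rightarrow> ('e \<Rightarrow> 'v) \<Rightarrow> (('v,'e) rep \<times> ('v,'e) rep \<Rightarrow> complex) set" where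
  "HQ2 E s t = {F. (\<forall>A B. F (A, B) \<noteq> 0 \<longrightarrow> A \<in> IsoQ E s t \<and> B \<in> IsoQ E s t) \<and> finite {p. F p \<noteq> 0}}"

definition hbasis :: "('v,'e) rep \<Rightarrow> ('v,'e) rep \<Rightarrow> complex" where
  "hbasis M = (\<lambda>X. if X = M then 1 else 0)"

definition hsmult :: "complex \<Rightarrow> ('a \<Rightarrow> complex) \<Rightarrow> 'a \<Rightarrow> complex" where
  "hsmult c f = (\<lambda>X. c * f X)"

definition hmult :: "'e set \<Rightarrow> ('e \<Rightarrow> 'v) \<Rightarrow> ('e \<Rightarrow> 'v) \<Rightarrow> (('v,'e) rep \<Rightarrow> complex) \<Rightarrow> (('v,'e) rep \<Rightarrow> complex)
    \<Rightarrow> ('v,'e) rep \<Rightarrow> complex" where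
  "hmult E s t f g = (\<lambda>M. if M \<in> IsoQ E s t then
      (\<Sum>L\<in>subreps E s t M. f (canon E s t (quot E s t M L)) * g (canon E s t (subrep s M L))) else 0)"

text \<open>Product in H_Q (x) H_Q: ([A](x)[B]) ([C](x)[D]) = [A][C] (x) [B][D], extended bilinearly.\<close>
definition hmult2 :: "'e set \<Rightarrow> ('e \<Rightarrow> 'v) \<Rightarrow> ('e \<Rightarrow> 'v)
    \<Rightarrow> (('v,'e) rep \<times> ('v,'e) rep \<Rightarrow> complex) \<Rightarrow> (('v,'e) rep \<times> ('v,'e) rep \<Rightarrow> complex)
    \<Rightarrow> ('v,'e) rep \<times> ('v,'e) rep \<Rightarrow> complex" where
  "hmult2 E s t F G = (\<lambda>(X1, X2). if X1 \<in> IsoQ E s t \<and> X2 \<in> IsoQ E s t then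
      (\<Sum>L1\<in>subreps E s t X1. \<Sum>L2\<in>subreps E s t X2.
         F (canon E s t (quot E s t X1 L1), canon E s t (quot E s t X2 L2)) *
         G (canon E s t (subrep s X1 L1), canon E s t (subrep s X2 L2))) else 0)"

definition hcomult :: "'e set \<Rightarrow> ('e \<Rightarrow> 'v) \<Rightarrow> ('e \<Rightarrow> 'v) \<Rightarrow> (('v,'e) rep \<Rightarrow> complex)
    \<Rightarrow> ('v,'e) rep \<times> ('v,'e) rep \<Rightarrow> complex" where
  "hcomult E s t f = (\<lambda>(A, B). if A \<in> IsoQ E s t \<and> B \<in> IsoQ E s t then f (canon E s t (dsum A B)) else 0)"

definition hunit :: "'e set \<Rightarrow> ('e \<Rightarrow> 'v) \<Rightarrow> ('e \<Rightarrow> 'v) \<Rightarrow> ('v,'e) rep \<Rightarrow> complex" where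
  "hunit E s t = hbasis (canon E s t zrep)"

definition hcounit :: "'e set \<Rightarrow> ('e \<Rightarrow> 'v) \<Rightarrow> ('e \<Rightarrow> 'v) \<Rightarrow> (('v,'e) rep \<Rightarrow> complex) \<Rightarrow> complex" where
  "hcounit E s t f = f (canon E s t zrep)"

definition Hdeg :: "'e set \<Rightarrow> ('e \<Rightarrow> 'v) \<Rightarrow> ('e \<Rightarrow> 'v) \<Rightarrow> ('v \<Rightarrow> nat) \<Rightarrow> (('v,'e) rep \<Rightarrow> complex) set" where
  "Hdeg E s t d = {f \<in> HQ E s t. \<forall>X. f X \<noteq> 0 \<longrightarrow> dimv X = d}"

text \<open>H_Q with hmult, hunit, hcomult, hcounit is a graded, connected, cocommutative bialgebra.
  (Bilinearity of hmult and linearity of hcomult, hcounit hold by their pointwise definitions.)\<close>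
definition graded_connected_cocomm_bialgebra :: "'e set \<Rightarrow> ('e \<Rightarrow> 'v) \<Rightarrow> ('e \<Rightarrow> 'v) \<Rightarrow> bool" where
  "graded_connected_cocomm_bialgebra E s t \<longleftrightarrow>
    \<comment> \<open>associative unital algebra\<close>
    hunit E s t \<in> HQ E s t \<and>
    (\<forall>f\<in>HQ E s t. \<forall>g\<in>HQ E s t. hmult E s t f g \<in> HQ E s t) \<and>
    (\<forall>f\<in>HQ E s t. \<forall>g\<in>HQ E s t. \<forall>h\<in>HQ E s t. hmult E s t (hmult E s t f g) h = hmult E s t f (hmult E s t g h)) \<and>
    (\<forall>f\<in>HQ E s t. hmult E s t (hunit E s t) f = f \<and> hmult E s t f (hunit E s t) = f) \<and>
    \<comment> \<open>coassociative counital cocommutative coalgebra\<close>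
    (\<forall>f\<in>HQ E s t. hcomult E s t f \<in> HQ2 E s t) \<and>
    (\<forall>f\<in>HQ E s t. \<forall>A\<in>IsoQ E s t. \<forall>B\<in>IsoQ E s t. \<forall>C\<in>IsoQ E s t.
        hcomult E s t f (canon E s t (dsum A B), C) = hcomult E s t f (A, canon E s t (dsum B C))) \<and>
    (\<forall>f\<in>HQ E s t. \<forall>B. hcomult E s t f (canon E s t zrep, B) = f B \<and> hcomult E s t f (B, canon E s t zrep) = f B) \<and>
    (\<forall>f\<in>HQ E s t. \<forall>A B. hcomult E s t f (A, B) = hcomult E s t f (B, A)) \<and>
    \<comment> \<open>compatibility: comultiplication and counit are algebra maps\<close>
    (\<forall>f\<in>HQ E s t. \<forall>g\<in>HQ E s t. hcomult E s t (hmult E s t f g) = hmult2 E s t (hcomult E s t f) (hcomult E s t g)) \<and>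
    (\<forall>A B. hcomult E s t (hunit E s t) (A, B) = hunit E s t A * hunit E s t B) \<and>
    (\<forall>f\<in>HQ E s t. \<forall>g\<in>HQ E s t. hcounit E s t (hmult E s t f g) = hcounit E s t f * hcounit E s t g) \<and>
    hcounit E s t (hunit E s t) = 1 \<and>
    \<comment> \<open>grading by dimension vectors\<close>
    (\<forall>d e. \<forall>f\<in>Hdeg E s t d. \<forall>g\<in>Hdeg E s t e. hmult E s t f g \<in> Hdeg E s t (\<lambda>i. d i + e i)) \<and>
    (\<forall>d. \<forall>f\<in>Hdeg E s t d. \<forall>A B. hcomult E s t f (A, B) \<noteq> 0 \<longrightarrow> (\<lambda>i. dimv A i + dimv B i) = d) \<and>
    \<comment> \<open>connected: degree-0 part is spanned by the unit\<close>
    hunit E s t \<in> Hdeg E s t (\<lambda>i. 0) \<and>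
    (\<forall>f\<in>Hdeg E s t (\<lambda>i. 0). \<exists>c. f = hsmult c (hunit E s t))"

definition has_antipode :: "'e set \<Rightarrow> ('e \<Rightarrow> 'v) \<Rightarrow> ('e \<Rightarrow> 'v) \<Rightarrow> bool" where
  "has_antipode E s t \<longleftrightarrow> (\<exists>S. (\<forall>f\<in>HQ E s t. S f \<in> HQ E s t) \<and>
     (\<forall>f\<in>HQ E s t. \<forall>g\<in>HQ E s t. S (\<lambda>X. f X + g X) = (\<lambda>X. S f X + S g X)) \<and>
     (\<forall>c. \<forall>f\<in>HQ E s t. S (hsmult c f) = hsmult c (S f)) \<and>
     (\<forall>f\<in>HQ E s t. \<forall>X.
        (\<Sum>p\<in>{p. hcomult E s t f p \<noteq> 0}.
            hcomult E s t f p * hmult E s t (S (hbasis (fst p))) (hbasis (snd p)) X)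
          = hcounit E s t f * hunit E s t X \<and>
        (\<Sum>p\<in>{p. hcomult E s t f p \<noteq> 0}.
            hcomult E s t f p * hmult E s t (hbasis (fst p)) (S (hbasis (snd p))) X)
          = hcounit E s t f * hunit E s t X))"

end

theory Submission
  imports Defs
begin

context
  fixes E :: "'e set" and s t :: "'e \<Rightarrow> 'v::finite"
begin

abbreviation "rrep \<equiv> is_rep E s t"
abbreviation "isoR \<equiv> rep_iso E s t"
abbreviation "cn \<equiv> canon E s t"
abbreviation "IQ \<equiv> IsoQ E s t"

lemma iso_refl: "rrep M \<Longrightarrow> isoR M M"
  unfolding rep_iso_def by (rule conjI, simp, rule conjI, simp, rule exI[of _ "\<lambda>i x. x"]) (auto simp: bij_betw_def)

lemma iso_sym: assumes "isoR M N" shows "isoR N M"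
proof -
  from assms obtain \<phi> where rM: "rrep M" and rN: "rrep N" and
    b: "\<And>i. bij_betw (\<phi> i) (fst M i) (fst N i)" and z: "\<And>i. \<phi> i 0 = 0" and
    c: "\<And>h x. h\<in>E \<Longrightarrow> x\<in>fst M (s h) \<Longrightarrow> \<phi> (t h) (snd M h x) = snd N h (\<phi> (s h) x)"
    unfolding rep_iso_def by blast
  define \<psi> where "\<psi> i = the_inv_into (fst M i) (\<phi> i)" for i
  have b': "bij_betw (\<psi> i) (fst N i) (fst M i)" for i
    unfolding \<psi>_def using b bij_betw_the_inv_into by blast
  have z': "\<psi> i 0 = 0" for i
  proof -
    have "0 \<in> fst M i" using rM unfolding is_rep_def by auto
    then show ?thesis unfolding \<psi>_def using z[of i] b[of i]
      by (metis bij_betw_imp_inj_on the_inv_into_f_f)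
  qed
  have c': "\<psi> (t h) (snd N h y) = snd M h (\<psi> (s h) y)" if h: "h\<in>E" and y: "y\<in>fst N (s h)" for h y
  proof -
    let ?x = "\<psi> (s h) y"
    have x: "?x \<in> fst M (s h)" using b' y by (meson bij_betwE)
    have px: "\<phi> (s h) ?x = y" unfolding \<psi>_def using b y by (meson f_the_inv_into_f_bij_betw)
    have fx: "snd M h ?x \<in> fst M (t h)" using rM h x unfolding is_rep_def by blast
    have "\<phi> (t h) (snd M h ?x) = snd N h y" using c[OF h x] px by simp
    then have "\<psi> (t h) (snd N h y) = \<psi> (t h) (\<phi> (t h) (snd M h ?x))" by simp
    also have "\<dots> = snd M h ?x"
      using the_inv_into_f_f[of "\<phi> (t h)" "fst M (t h)" "snd M h ?x"] b[of "t h"] fx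
      unfolding \<psi>_def bij_betw_def by blast
    finally show ?thesis .
  qed
  show ?thesis unfolding rep_iso_def using rM rN b' z' c' by blast
qed

lemma iso_trans: assumes "isoR M N" "isoR N P" shows "isoR M P"
proof -
  from assms(1) obtain \<phi> where rM: "rrep M" and rN: "rrep N" and
    b: "\<And>i. bij_betw (\<phi> i) (fst M i) (fst N i)" and z: "\<And>i. \<phi> i 0 = 0" and
    c: "\<And>h x. h\<in>E \<Longrightarrow> x\<in>fst M (s h) \<Longrightarrow> \<phi> (t h) (snd M h x) = snd N h (\<phi> (s h) x)"
    unfolding rep_iso_def by blast
  from assms(2) obtain \<psi> where rP: "rrep P" and
    b2: "\<And>i. bij_betw (\<psi> i) (fst N i) (fst P i)" and z2: "\<And>i. \<psi> i 0 = 0" and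
    c2: "\<And>h x. h\<in>E \<Longrightarrow> x\<in>fst N (s h) \<Longrightarrow> \<psi> (t h) (snd N h x) = snd P h (\<psi> (s h) x)"
    unfolding rep_iso_def by blast
  show ?thesis unfolding rep_iso_def
  proof (intro conjI exI[of _ "\<lambda>i. \<psi> i \<circ> \<phi> i"] allI ballI)
    show "rrep M" "rrep P" by fact+
    fix i show "bij_betw (\<psi> i \<circ> \<phi> i) (fst M i) (fst P i)" using b b2 bij_betw_trans by blast
    show "(\<psi> i \<circ> \<phi> i) 0 = 0" using z z2 by simp
  next
    fix h x assume h: "h \<in> E" and x: "x \<in> fst M (s h)"
    have "\<phi> (s h) x \<in> fst N (s h)" using b x by (meson bij_betwE)
    then show "(\<psi> (t h) \<circ> \<phi> (t h)) (snd M h x) = snd P h ((\<psi> (s h) \<circ> \<phi> (s h)) x)"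
      using c[OF h x] c2[OF h] by simp
  qed
qed

lemma iso_rep1: "isoR M N \<Longrightarrow> rrep M" and iso_rep2: "isoR M N \<Longrightarrow> rrep N"
  unfolding rep_iso_def by auto

lemma canon_iso: "rrep M \<Longrightarrow> isoR M (cn M)"
  unfolding canon_def by (rule someI[of _ M]) (rule iso_refl)

lemma canon_eq: assumes "isoR M N" shows "cn M = cn N"
proof -
  have "isoR M X \<longleftrightarrow> isoR N X" for X
    using assms iso_sym[of M N] iso_trans[of M N X] iso_trans[of N M X] by blast
  then have "(\<lambda>X. isoR M X) = (\<lambda>X. isoR N X)" by (rule ext)
  then show ?thesis unfolding canon_def by simp
qed

lemma canon_eq_iff: assumes "rrep M" "rrep N" shows "cn M = cn N \<longleftrightarrow> isoR M N"
proof
  assume "cn M = cn N"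
  then have "isoR M (cn N)" using canon_iso[OF assms(1)] by simp
  then show "isoR M N" using iso_trans iso_sym canon_iso[OF assms(2)] by blast
qed (rule canon_eq)

lemma IQ_rep: "X \<in> IQ \<Longrightarrow> rrep X"
  unfolding IsoQ_def using canon_iso iso_rep2 by blast

lemma canon_IQ: "rrep M \<Longrightarrow> cn M \<in> IQ"
  unfolding IsoQ_def by blast

lemma canon_idem: assumes "X \<in> IQ" shows "cn X = X"
proof -
  obtain M where M: "rrep M" "X = cn M" using assms unfolding IsoQ_def by blast
  have "isoR M X" using canon_iso[OF M(1)] M(2) by simp
  then have "isoR X M" by (rule iso_sym)
  then have "cn X = cn M" by (rule canon_eq)
  then show ?thesis using M(2) by simp
qed

lemma iso_canon_eq: "isoR M X \<Longrightarrow> X \<in> IQ \<Longrightarrow> cn M = X"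
  using canon_eq[of M X] canon_idem[of X] by simp

lemma repD: assumes "rrep M"
  shows "finite (fst M i)" "0 \<in> fst M i" "snd M h 0 = 0"
    "x \<notin> fst M (s h) \<Longrightarrow> snd M h x = 0"
    "x \<in> fst M (s h) \<Longrightarrow> snd M h x \<in> fst M (t h)"
    "h \<notin> E \<Longrightarrow> snd M h x = 0"
    "x \<in> fst M (s h) \<Longrightarrow> y \<in> fst M (s h) \<Longrightarrow> snd M h x = snd M h y \<Longrightarrow> snd M h x \<noteq> 0 \<Longrightarrow> x = y"
proof -
  have R1: "\<forall>i. finite (fst M i) \<and> 0 \<in> fst M i" and R2: "\<forall>h. h \<notin> E \<longrightarrow> snd M h = (\<lambda>x. 0)"
    and R3: "\<forall>h\<in>E. snd M h 0 = 0 \<and> snd M h ` fst M (s h) \<subseteq> fst M (t h) \<and>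
          inj_on (snd M h) {x \<in> fst M (s h). snd M h x \<noteq> 0} \<and>
          (\<forall>x. x \<notin> fst M (s h) \<longrightarrow> snd M h x = 0)"
    using assms unfolding is_rep_def by blast+
  show "finite (fst M i)" using R1 by blast
  show "0 \<in> fst M i" using R1 by blast
  show "snd M h 0 = 0" using R2 R3 by (cases "h \<in> E") simp_all
  show "h \<notin> E \<Longrightarrow> snd M h x = 0" using R2 by simp
  show "x \<notin> fst M (s h) \<Longrightarrow> snd M h x = 0" using R2 R3 by (cases "h \<in> E") simp_all
  show "snd M h x \<in> fst M (t h)" if x: "x \<in> fst M (s h)"
  proof (cases "h \<in> E")
    case True
    then have "snd M h ` fst M (s h) \<subseteq> fst M (t h)" using R3 by blast
    then show ?thesis using x by blast
  next
    case False then show ?thesis using R1 R2 by simp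
  qed
  assume "x \<in> fst M (s h)" "y \<in> fst M (s h)" "snd M h x = snd M h y" "snd M h x \<noteq> 0"
  then show "x = y" using R2 R3 unfolding inj_on_def by (cases "h \<in> E") auto
qed

lemma repI: assumes "\<And>i. finite (fst M i)" "\<And>i. 0 \<in> fst M i"
    "\<And>h x. h \<notin> E \<Longrightarrow> snd M h x = 0"
    "\<And>h x. x \<notin> fst M (s h) \<Longrightarrow> snd M h x = 0"
    "\<And>h x. h \<in> E \<Longrightarrow> x \<in> fst M (s h) \<Longrightarrow> snd M h x \<in> fst M (t h)"
    "\<And>h. snd M h 0 = 0"
    "\<And>h x y. h \<in> E \<Longrightarrow> x \<in> fst M (s h) \<Longrightarrow> y \<in> fst M (s h) \<Longrightarrow> snd M h x = snd M h y \<Longrightarrow> snd M h x \<noteq> 0 \<Longrightarrow> x = y"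
  shows "rrep M"
  unfolding is_rep_def
proof (intro conjI allI ballI impI)
  fix h assume "h \<notin> E" then show "snd M h = (\<lambda>x. 0)" using assms(3) by auto
next
  fix h assume h: "h \<in> E"
  show "snd M h 0 = 0" using assms(6) by blast
  show "snd M h ` fst M (s h) \<subseteq> fst M (t h)" using assms(5) h by blast
  show "inj_on (snd M h) {x \<in> fst M (s h). snd M h x \<noteq> 0}"
    unfolding inj_on_def using assms(7)[OF h] by blast
  fix x show "x \<notin> fst M (s h) \<Longrightarrow> snd M h x = 0" using assms(4) by blast
next
  fix i show "finite (fst M i)" "0 \<in> fst M i" using assms(1,2) by blast+
qed

lemma iso_bij: "isoR M N \<Longrightarrow> \<exists>\<phi>. (\<forall>i. bij_betw (\<phi> i) (fst M i) (fst N i) \<and> \<phi> i 0 = 0) \<and>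
        (\<forall>h\<in>E. \<forall>x\<in>fst M (s h). \<phi> (t h) (snd M h x) = snd N h (\<phi> (s h) x))"
  unfolding rep_iso_def by blast

lemma iso_card: "isoR M N \<Longrightarrow> card (fst M i) = card (fst N i)"
  using iso_bij bij_betw_same_card by blast

lemma rep_subrep: assumes M: "rrep M" and L: "L \<in> subreps E s t M" shows "rrep (subrep s M L)"
proof -
  have Li: "0 \<in> L i" "L i \<subseteq> fst M i" for i using L unfolding subreps_def by auto
  have st: "h \<in> E \<Longrightarrow> x \<in> L (s h) \<Longrightarrow> snd M h x \<in> L (t h)" for h x using L unfolding subreps_def by blast
  show ?thesis
  proof (rule repI, goal_cases)
    case (1 i) then show ?case using repD(1)[OF M, of i] Li(2)[of i] finite_subset unfolding subrep_def by (metis fst_conv)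
  next
    case (2 i) then show ?case using Li unfolding subrep_def by auto
  next
    case (3 h x) then show ?case using repD(6)[OF M] unfolding subrep_def by auto
  next
    case (4 h x) then show ?case unfolding subrep_def by auto
  next
    case (5 h x) then show ?case using st unfolding subrep_def by auto
  next
    case (6 h) then show ?case using repD(3)[OF M] Li unfolding subrep_def by auto
  next
    case (7 h x y) then show ?case using repD(7)[OF M, of x h y] Li(2) unfolding subrep_def
      by (auto split: if_splits)
  qed
qed

lemma rep_quot: assumes M: "rrep M" and L: "L \<in> subreps E s t M" shows "rrep (quot E s t M L)"
proof -
  have Li: "0 \<in> L i" "L i \<subseteq> fst M i" for i using L unfolding subreps_def by auto
  show ?thesis
  proof (rule repI, goal_cases)
    case (1 i) then show ?case using repD(1)[OF M, of i] unfolding quot_def by auto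
  next
    case (2 i) then show ?case unfolding quot_def by auto
  next
    case (3 h x) then show ?case using repD(6)[OF M] Li unfolding quot_def by auto
  next
    case (4 h x) then show ?case unfolding quot_def by auto
  next
    case (5 h x) then show ?case using repD(5)[OF M] unfolding quot_def by auto
  next
    case (6 h) then show ?case using Li unfolding quot_def by auto
  next
    case (7 h x y) then show ?case using repD(7)[OF M, of x h y] Li unfolding quot_def
      by (auto split: if_splits)
  qed
qed

lemma rep_zrep: "rrep zrep"
  by (rule repI) (auto simp: zrep_def)

lemma subreps_finite: assumes M: "rrep M" shows "finite (subreps E s t M)"
proof -
  let ?B = "Pow (\<Union>i. fst M i)"
  have fB: "finite ?B" using repD(1)[OF M] by simp
  have "subreps E s t M \<subseteq> {f. \<forall>x. (x \<in> UNIV \<longrightarrow> f x \<in> ?B) \<and> (x \<notin> UNIV \<longrightarrow> f x = {})}"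
    unfolding subreps_def by blast
  moreover have "finite {f :: 'v \<Rightarrow> nat set. \<forall>x. (x \<in> UNIV \<longrightarrow> f x \<in> ?B) \<and> (x \<notin> UNIV \<longrightarrow> f x = {})}"
    by (rule finite_set_of_finite_funs) (use fB finite_UNIV in auto)
  ultimately show ?thesis by (rule finite_subset)
qed

lemma rep_eqI: assumes "rrep M" "rrep N" "fst M = fst N"
  "\<And>h x. h \<in> E \<Longrightarrow> x \<in> fst M (s h) \<Longrightarrow> snd M h x = snd N h x"
  shows "M = N"
proof -
  have "snd M h x = snd N h x" for h x
    using assms repD(4,6)[OF assms(1)] repD(4,6)[OF assms(2)] by (cases "h \<in> E"; cases "x \<in> fst M (s h)") auto
  then have "snd M = snd N" by (intro ext)
  with assms(3) show ?thesis by (simp add: prod_eq_iff)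
qed

lemma zrep_unique: assumes "rrep X" "\<And>i. fst X i = {0}" shows "X = zrep"
  by (rule rep_eqI[OF assms(1) rep_zrep]) (use assms repD(3)[OF assms(1)] in \<open>auto simp: zrep_def\<close>)

lemma iso_zrep_iff: assumes "rrep X" shows "isoR X zrep \<longleftrightarrow> X = zrep"
proof
  assume "isoR X zrep"
  then have "card (fst X i) = 1" for i using iso_card[of X zrep i] by (simp add: zrep_def)
  then have "fst X i = {0}" for i using repD(2)[OF assms, of i]
    by (metis card_1_singletonE singletonD)
  then show "X = zrep" using zrep_unique assms by blast
qed (simp add: iso_refl rep_zrep)

lemma canon_zrep: "cn zrep = zrep"
proof -
  have "isoR zrep (cn zrep)" by (rule canon_iso[OF rep_zrep])
  then have "isoR (cn zrep) zrep" by (rule iso_sym)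
  then show ?thesis using iso_zrep_iff iso_rep1 by blast
qed

lemma zrep_IQ: "zrep \<in> IQ"
  using canon_IQ[OF rep_zrep] canon_zrep by simp

lemma canon_eq_zrep: "rrep X \<Longrightarrow> cn X = zrep \<longleftrightarrow> X = zrep"
  using canon_eq_iff[OF _ rep_zrep] canon_zrep iso_zrep_iff by metis

lemma subreps_D: "L \<in> subreps E s t M \<Longrightarrow> 0 \<in> L i"
  "L \<in> subreps E s t M \<Longrightarrow> L i \<subseteq> fst M i"
  "L \<in> subreps E s t M \<Longrightarrow> h \<in> E \<Longrightarrow> x \<in> L (s h) \<Longrightarrow> snd M h x \<in> L (t h)"
  unfolding subreps_def by blast+

lemma subreps_I: "(\<And>i. 0 \<in> L i) \<Longrightarrow> (\<And>i. L i \<subseteq> fst M i) \<Longrightarrow>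
   (\<And>h x. h \<in> E \<Longrightarrow> x \<in> L (s h) \<Longrightarrow> snd M h x \<in> L (t h)) \<Longrightarrow> L \<in> subreps E s t M"
  unfolding subreps_def by blast

lemma transport:
  assumes rM: "rrep M" and rN: "rrep N" and b: "\<And>i. bij_betw (\<phi> i) (fst M i) (fst N i)"
    and z: "\<And>i. \<phi> i 0 = 0"
    and c: "\<And>h x. h\<in>E \<Longrightarrow> x\<in>fst M (s h) \<Longrightarrow> \<phi> (t h) (snd M h x) = snd N h (\<phi> (s h) x)"
  shows "bij_betw (\<lambda>L i. \<phi> i ` L i) (subreps E s t M) (subreps E s t N)"
    and "L \<in> subreps E s t M \<Longrightarrow> isoR (subrep s M L) (subrep s N (\<lambda>i. \<phi> i ` L i))"
    and "L \<in> subreps E s t M \<Longrightarrow> isoR (quot E s t M L) (quot E s t N (\<lambda>i. \<phi> i ` L i))"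
proof -
  have inj: "\<And>i. inj_on (\<phi> i) (fst M i)" and img: "\<And>i. \<phi> i ` fst M i = fst N i"
    using b unfolding bij_betw_def by auto
  have mem: "\<phi> i x \<in> fst N i" if "x \<in> fst M i" for i x using img that by blast
  have inL: "\<phi> i x \<in> \<phi> i ` L i \<longleftrightarrow> x \<in> L i" if "x \<in> fst M i" "L i \<subseteq> fst M i" for i x L
    using inj[of i] that by (auto simp: inj_on_def)
  have pres: "(\<lambda>i. \<phi> i ` L i) \<in> subreps E s t N" if L: "L \<in> subreps E s t M" for L
  proof (rule subreps_I)
    fix i show "0 \<in> \<phi> i ` L i" using subreps_D(1)[OF L, of i] z[of i] by (metis image_eqI)
    show "\<phi> i ` L i \<subseteq> fst N i" using subreps_D(2)[OF L, of i] img[of i] by blast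
  next
    fix h x assume h: "h \<in> E" and x: "x \<in> \<phi> (s h) ` L (s h)"
    then obtain y where y: "y \<in> L (s h)" "x = \<phi> (s h) y" by blast
    have yM: "y \<in> fst M (s h)" using y subreps_D(2)[OF L] by blast
    have "snd N h x = \<phi> (t h) (snd M h y)" using c[OF h yM] y by simp
    moreover have "snd M h y \<in> L (t h)" using subreps_D(3)[OF L h y(1)] .
    ultimately show "snd N h x \<in> \<phi> (t h) ` L (t h)" by blast
  qed
  show "bij_betw (\<lambda>L i. \<phi> i ` L i) (subreps E s t M) (subreps E s t N)"
    unfolding bij_betw_def
  proof (intro conjI)
    show "inj_on (\<lambda>L i. \<phi> i ` L i) (subreps E s t M)"
    proof (rule inj_onI)
      fix L L' assume L: "L \<in> subreps E s t M" and L': "L' \<in> subreps E s t M"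
        and eq: "(\<lambda>i. \<phi> i ` L i) = (\<lambda>i. \<phi> i ` L' i)"
      show "L = L'"
      proof (rule ext)
        fix i
        have "\<phi> i ` L i = \<phi> i ` L' i" using eq by meson
        then show "L i = L' i"
          using inj_on_image_eq_iff[OF inj[of i] subreps_D(2)[OF L] subreps_D(2)[OF L']] by blast
      qed
    qed
    show "(\<lambda>L i. \<phi> i ` L i) ` subreps E s t M = subreps E s t N"
    proof
      show "(\<lambda>L i. \<phi> i ` L i) ` subreps E s t M \<subseteq> subreps E s t N" using pres by blast
    next
      show "subreps E s t N \<subseteq> (\<lambda>L i. \<phi> i ` L i) ` subreps E s t M"
      proof
        fix K assume K: "K \<in> subreps E s t N"
        define L where "L i = {x \<in> fst M i. \<phi> i x \<in> K i}" for i
        have LM: "L \<in> subreps E s t M"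
        proof (rule subreps_I)
          fix i show "0 \<in> L i" unfolding L_def using repD(2)[OF rM] z subreps_D(1)[OF K] by simp
          show "L i \<subseteq> fst M i" unfolding L_def by blast
        next
          fix h x assume h: "h \<in> E" and x: "x \<in> L (s h)"
          then have xM: "x \<in> fst M (s h)" and xK: "\<phi> (s h) x \<in> K (s h)" unfolding L_def by auto
          have "\<phi> (t h) (snd M h x) \<in> K (t h)" using c[OF h xM] subreps_D(3)[OF K h xK] by simp
          then show "snd M h x \<in> L (t h)" unfolding L_def using repD(5)[OF rM xM] by blast
        qed
        have "(\<lambda>i. \<phi> i ` L i) = K"
        proof (rule ext)
          fix i
          show "\<phi> i ` L i = K i"
          proof
            show "\<phi> i ` L i \<subseteq> K i" unfolding L_def by blast
            show "K i \<subseteq> \<phi> i ` L i"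
            proof
              fix y assume y: "y \<in> K i"
              then have "y \<in> fst N i" using subreps_D(2)[OF K] by blast
              then obtain x where "x \<in> fst M i" "y = \<phi> i x" using img[of i] by blast
              then show "y \<in> \<phi> i ` L i" unfolding L_def using y by blast
            qed
          qed
        qed
        then show "K \<in> (\<lambda>L i. \<phi> i ` L i) ` subreps E s t M" using LM by blast
      qed
    qed
  qed
  show "isoR (subrep s M L) (subrep s N (\<lambda>i. \<phi> i ` L i))" if L: "L \<in> subreps E s t M"
    unfolding rep_iso_def
  proof (intro conjI exI[of _ \<phi>] allI ballI)
    show "rrep (subrep s M L)" by (rule rep_subrep[OF rM L])
    show "rrep (subrep s N (\<lambda>i. \<phi> i ` L i))" by (rule rep_subrep[OF rN pres[OF L]])
    fix i
    show "bij_betw (\<phi> i) (fst (subrep s M L) i) (fst (subrep s N (\<lambda>i. \<phi> i ` L i)) i)"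
      unfolding subrep_def using inj_on_subset[OF inj subreps_D(2)[OF L]] by (simp add: inj_on_imp_bij_betw)
    show "\<phi> i 0 = 0" by (rule z)
  next
    fix h x assume h: "h \<in> E" and x: "x \<in> fst (subrep s M L) (s h)"
    then have xL: "x \<in> L (s h)" unfolding subrep_def by simp
    then have xM: "x \<in> fst M (s h)" using subreps_D(2)[OF L] by blast
    show "\<phi> (t h) (snd (subrep s M L) h x) = snd (subrep s N (\<lambda>i. \<phi> i ` L i)) h (\<phi> (s h) x)"
      unfolding subrep_def using xL c[OF h xM] by simp
  qed
  show "isoR (quot E s t M L) (quot E s t N (\<lambda>i. \<phi> i ` L i))" if L: "L \<in> subreps E s t M"
    unfolding rep_iso_def
  proof (intro conjI exI[of _ \<phi>] allI ballI)
    show "rrep (quot E s t M L)" by (rule rep_quot[OF rM L])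
    show "rrep (quot E s t N (\<lambda>i. \<phi> i ` L i))" by (rule rep_quot[OF rN pres[OF L]])
    have LM: "\<And>i. L i \<subseteq> fst M i" using subreps_D(2)[OF L] .
    fix i
    have sub: "(fst M i - L i) \<union> {0} \<subseteq> fst M i" using repD(2)[OF rM] by blast
    have "\<phi> i ` ((fst M i - L i) \<union> {0}) = (fst N i - \<phi> i ` L i) \<union> {0}"
      using img[of i] z[of i] inj_on_image_set_diff[OF inj[of i] _ LM[of i]] by auto
    then show "bij_betw (\<phi> i) (fst (quot E s t M L) i) (fst (quot E s t N (\<lambda>i. \<phi> i ` L i)) i)"
      unfolding quot_def using inj_on_subset[OF inj sub] by (simp add: bij_betw_def)
    show "\<phi> i 0 = 0" by (rule z)
  next
    fix h x assume h: "h \<in> E" and x: "x \<in> fst (quot E s t M L) (s h)"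
    then have xM: "x \<in> fst M (s h)" unfolding quot_def using repD(2)[OF rM] by auto
    have fx: "snd M h x \<in> fst M (t h)" by (rule repD(5)[OF rM xM])
    have LM: "\<And>i. L i \<subseteq> fst M i" using subreps_D(2)[OF L] .
    have e1: "\<phi> (s h) x \<in> \<phi> (s h) ` L (s h) \<longleftrightarrow> x \<in> L (s h)" using inL[of x "s h" L, OF xM LM[of "s h"]] .
    have e2: "\<phi> (t h) (snd M h x) \<in> \<phi> (t h) ` L (t h) \<longleftrightarrow> snd M h x \<in> L (t h)" using inL[of "snd M h x" "t h" L, OF fx LM[of "t h"]] .
    have e3: "\<phi> (s h) x \<in> fst N (s h)" using mem[OF xM] .
    show "\<phi> (t h) (snd (quot E s t M L) h x) = snd (quot E s t N (\<lambda>i. \<phi> i ` L i)) h (\<phi> (s h) x)"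
      unfolding quot_def using e1 e2 e3 xM c[OF h xM] z by auto
  qed
qed

lemma sum_iso_inv:
  assumes "isoR M N"
  shows "(\<Sum>L\<in>subreps E s t M. G (cn (quot E s t M L)) (cn (subrep s M L)))
       = (\<Sum>L\<in>subreps E s t N. G (cn (quot E s t N L)) (cn (subrep s N L)))"
proof -
  obtain \<phi> where b: "\<And>i. bij_betw (\<phi> i) (fst M i) (fst N i)" and z: "\<And>i. \<phi> i 0 = 0"
    and c: "\<And>h x. h\<in>E \<Longrightarrow> x\<in>fst M (s h) \<Longrightarrow> \<phi> (t h) (snd M h x) = snd N h (\<phi> (s h) x)"
    using iso_bij[OF assms] by blast
  note T = transport[OF iso_rep1[OF assms] iso_rep2[OF assms] b z c]
  have "(\<Sum>L\<in>subreps E s t M. G (cn (quot E s t M L)) (cn (subrep s M L)))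
     = (\<Sum>L\<in>subreps E s t M. G (cn (quot E s t N (\<lambda>i. \<phi> i ` L i))) (cn (subrep s N (\<lambda>i. \<phi> i ` L i))))"
    by (rule sum.cong[OF refl]) (simp add: canon_eq[OF T(2)] canon_eq[OF T(3)])
  also have "\<dots> = (\<Sum>L\<in>subreps E s t N. G (cn (quot E s t N L)) (cn (subrep s N L)))"
    by (rule sum.reindex_bij_betw[OF T(1)])
  finally show ?thesis .
qed

definition Kq :: "('v \<Rightarrow> nat set) \<Rightarrow> ('v \<Rightarrow> nat set) \<Rightarrow> 'v \<Rightarrow> nat set" where
  "Kq L K = (\<lambda>i. (K i - L i) \<union> {0})"

lemma quot_quot: assumes "\<And>i. L i \<subseteq> K i" "\<And>i. K i \<subseteq> fst M i" "\<And>i. 0 \<in> L i"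
  shows "quot E s t (quot E s t M L) (Kq L K) = quot E s t M K"
proof -
  have "fst (quot E s t (quot E s t M L) (Kq L K)) = fst (quot E s t M K)"
    unfolding quot_def Kq_def using assms by (intro ext) auto
  moreover have "snd (quot E s t (quot E s t M L) (Kq L K)) h x = snd (quot E s t M K) h x" for h x
    unfolding quot_def Kq_def using assms[of "s h"] assms[of "t h"] by auto
  ultimately show ?thesis by (simp add: prod_eq_iff ext)
qed

lemma subrep_quot: assumes "\<And>i. L i \<subseteq> K i" "\<And>i. K i \<subseteq> fst M i" "\<And>i. 0 \<in> L i"
  shows "subrep s (quot E s t M L) (Kq L K) = quot E s t (subrep s M K) L"
proof -
  have "fst (subrep s (quot E s t M L) (Kq L K)) = fst (quot E s t (subrep s M K) L)"
    unfolding quot_def Kq_def subrep_def using assms by (intro ext) auto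
  moreover have "snd (subrep s (quot E s t M L) (Kq L K)) h x = snd (quot E s t (subrep s M K) L) h x" for h x
    unfolding quot_def Kq_def subrep_def using assms[of "s h"] assms[of "t h"] by auto
  ultimately show ?thesis by (simp add: prod_eq_iff ext)
qed

lemma subrep_subrep: assumes "\<And>i. L i \<subseteq> K i"
  shows "subrep s (subrep s M K) L = subrep s M L"
proof -
  have "snd (subrep s (subrep s M K) L) h x = snd (subrep s M L) h x" for h x
    unfolding subrep_def using assms[of "s h"] by auto
  then show ?thesis by (simp add: prod_eq_iff ext subrep_def)
qed

lemma subreps_subrep: assumes K: "K \<in> subreps E s t M"
  shows "subreps E s t (subrep s M K) = {L \<in> subreps E s t M. \<forall>i. L i \<subseteq> K i}"
proof -
  have KM: "K i \<subseteq> fst M i" for i using subreps_D(2)[OF K] .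
  show ?thesis
  proof (intro set_eqI iffI)
    fix L assume L: "L \<in> subreps E s t (subrep s M K)"
    have LK: "L i \<subseteq> K i" for i using subreps_D(2)[OF L] unfolding subrep_def by simp
    have "L \<in> subreps E s t M"
    proof (rule subreps_I)
      fix i show "0 \<in> L i" using subreps_D(1)[OF L] .
      show "L i \<subseteq> fst M i" using LK KM by blast
    next
      fix h x assume h: "h \<in> E" and x: "x \<in> L (s h)"
      have "snd (subrep s M K) h x \<in> L (t h)" using subreps_D(3)[OF L h] x unfolding subrep_def by simp
      then show "snd M h x \<in> L (t h)" using x LK unfolding subrep_def by (simp split: if_splits; blast)
    qed
    then show "L \<in> {L \<in> subreps E s t M. \<forall>i. L i \<subseteq> K i}" using LK by blast
  next
    fix L assume "L \<in> {L \<in> subreps E s t M. \<forall>i. L i \<subseteq> K i}"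
    then have L: "L \<in> subreps E s t M" and LK: "\<And>i. L i \<subseteq> K i" by auto
    show "L \<in> subreps E s t (subrep s M K)"
    proof (rule subreps_I)
      fix i show "0 \<in> L i" using subreps_D(1)[OF L] .
      show "L i \<subseteq> fst (subrep s M K) i" using LK unfolding subrep_def by simp
    next
      fix h x assume h: "h \<in> E" and x: "x \<in> L (s h)"
      then have "x \<in> K (s h)" using LK by blast
      then show "snd (subrep s M K) h x \<in> L (t h)" using subreps_D(3)[OF L h x] unfolding subrep_def by simp
    qed
  qed
qed

lemma Kq_bij: assumes M: "rrep M" and L: "L \<in> subreps E s t M"
  shows "bij_betw (Kq L) {K \<in> subreps E s t M. \<forall>i. L i \<subseteq> K i} (subreps E s t (quot E s t M L))"
proof -
  have L0: "0 \<in> L i" and LM: "L i \<subseteq> fst M i" for i using subreps_D[OF L] by auto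
  have into: "Kq L K \<in> subreps E s t (quot E s t M L)" if K: "K \<in> subreps E s t M" and LK: "\<And>i. L i \<subseteq> K i" for K
  proof (rule subreps_I)
    fix i show "0 \<in> Kq L K i" unfolding Kq_def by simp
    show "Kq L K i \<subseteq> fst (quot E s t M L) i" unfolding Kq_def quot_def using subreps_D(2)[OF K] by auto
  next
    fix h x assume h: "h \<in> E" and x: "x \<in> Kq L K (s h)"
    show "snd (quot E s t M L) h x \<in> Kq L K (t h)"
    proof (cases "x \<in> fst M (s h) - L (s h) \<and> snd M h x \<notin> L (t h)")
      case True
      then have "x \<in> K (s h)" using x L0[of "s h"] unfolding Kq_def by auto
      then have "snd M h x \<in> K (t h)" using subreps_D(3)[OF K h] by blast
      then show ?thesis using True unfolding quot_def Kq_def by simp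
    next
      case False then show ?thesis unfolding quot_def Kq_def snd_conv by (subst if_not_P[OF False]) simp
    qed
  qed
  have bk: "(\<lambda>i. Q i \<union> L i) \<in> subreps E s t M" "\<And>i. L i \<subseteq> Q i \<union> L i"
    "Kq L (\<lambda>i. Q i \<union> L i) = Q" if Q: "Q \<in> subreps E s t (quot E s t M L)" for Q
  proof -
    have Qsub: "Q i \<subseteq> (fst M i - L i) \<union> {0}" for i using subreps_D(2)[OF Q] unfolding quot_def by simp
    show "(\<lambda>i. Q i \<union> L i) \<in> subreps E s t M"
    proof (rule subreps_I)
      fix i show "0 \<in> Q i \<union> L i" using L0 by blast
      show "Q i \<union> L i \<subseteq> fst M i" using Qsub[of i] LM[of i] repD(2)[OF M, of i] by blast
    next
      fix h x assume h: "h \<in> E" and x: "x \<in> Q (s h) \<union> L (s h)"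
      show "snd M h x \<in> Q (t h) \<union> L (t h)"
      proof (cases "x \<in> L (s h)")
        case True then show ?thesis using subreps_D(3)[OF L h] by blast
      next
        case False
        then have x': "x \<in> Q (s h)" using x by blast
        show ?thesis
        proof (cases "x = 0")
          case True then show ?thesis using repD(3)[OF M] L0 by simp
        next
          case False
          then have xm: "x \<in> fst M (s h) - L (s h)" using x' Qsub \<open>x \<notin> L (s h)\<close> by blast
          have "snd (quot E s t M L) h x \<in> Q (t h)" using subreps_D(3)[OF Q h x'] .
          then show ?thesis using xm unfolding quot_def by (auto split: if_splits)
        qed
      qed
    qed
    fix i show "L i \<subseteq> Q i \<union> L i" by blast
  next
    have Qsub: "Q i \<subseteq> (fst M i - L i) \<union> {0}" for i using subreps_D(2)[OF Q] unfolding quot_def by simp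
    have "0 \<in> Q i" for i using subreps_D(1)[OF Q] .
    then show "Kq L (\<lambda>i. Q i \<union> L i) = Q" unfolding Kq_def using Qsub by (intro ext) blast
  qed
  show ?thesis
  proof (rule bij_betw_byWitness[where f' = "\<lambda>Q i. Q i \<union> L i"])
    show "\<forall>K\<in>{K \<in> subreps E s t M. \<forall>i. L i \<subseteq> K i}. (\<lambda>i. Kq L K i \<union> L i) = K"
    proof
      fix K assume "K \<in> {K \<in> subreps E s t M. \<forall>i. L i \<subseteq> K i}"
      then have "0 \<in> K i" "L i \<subseteq> K i" for i using subreps_D(1)[of K M i] by auto
      then show "(\<lambda>i. Kq L K i \<union> L i) = K" unfolding Kq_def by (intro ext) blast
    qed
    show "\<forall>Q\<in>subreps E s t (quot E s t M L). Kq L (\<lambda>i. Q i \<union> L i) = Q" using bk(3) by blast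
    show "Kq L ` {K \<in> subreps E s t M. \<forall>i. L i \<subseteq> K i} \<subseteq> subreps E s t (quot E s t M L)"
      using into by blast
    show "(\<lambda>Q i. Q i \<union> L i) ` subreps E s t (quot E s t M L) \<subseteq> {K \<in> subreps E s t M. \<forall>i. L i \<subseteq> K i}"
      using bk(1,2) by blast
  qed
qed

lemma hmult_canon: assumes "rrep Q"
  shows "hmult E s t f g (cn Q) = (\<Sum>K\<in>subreps E s t Q. f (cn (quot E s t Q K)) * g (cn (subrep s Q K)))"
proof -
  have "isoR (cn Q) Q" using iso_sym[OF canon_iso[OF assms]] .
  then show ?thesis unfolding hmult_def using canon_IQ[OF assms]
    sum_iso_inv[of "cn Q" Q "\<lambda>a b. f a * g b"] by simp
qed

lemma hmult_assoc: "hmult E s t (hmult E s t f g) h = hmult E s t f (hmult E s t g h)"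
proof (rule ext)
  fix M
  show "hmult E s t (hmult E s t f g) h M = hmult E s t f (hmult E s t g h) M"
  proof (cases "M \<in> IQ")
    case False then show ?thesis unfolding hmult_def by simp
  next
    case True
    have M: "rrep M" using IQ_rep[OF True] .
    let ?S = "subreps E s t M"
    let ?R = "\<lambda>L K. \<forall>i. L i \<subseteq> K i"
    have fS: "finite ?S" using subreps_finite[OF M] .
    have "hmult E s t (hmult E s t f g) h M =
      (\<Sum>L\<in>?S. hmult E s t f g (cn (quot E s t M L)) * h (cn (subrep s M L)))"
      unfolding hmult_def using True by simp
    also have "\<dots> = (\<Sum>L\<in>?S. \<Sum>K\<in>{K \<in> ?S. ?R L K}.
        f (cn (quot E s t M K)) * g (cn (quot E s t (subrep s M K) L)) * h (cn (subrep s M L)))"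
    proof (rule sum.cong[OF refl])
      fix L assume L: "L \<in> ?S"
      have Q: "rrep (quot E s t M L)" using rep_quot[OF M L] .
      have "hmult E s t f g (cn (quot E s t M L)) =
          (\<Sum>K'\<in>subreps E s t (quot E s t M L). f (cn (quot E s t (quot E s t M L) K')) *
              g (cn (subrep s (quot E s t M L) K')))"
        by (rule hmult_canon[OF Q])
      also have "\<dots> = (\<Sum>K\<in>{K \<in> ?S. ?R L K}. f (cn (quot E s t (quot E s t M L) (Kq L K))) *
              g (cn (subrep s (quot E s t M L) (Kq L K))))"
        by (rule sum.reindex_bij_betw[OF Kq_bij[OF M L], symmetric])
      also have "\<dots> = (\<Sum>K\<in>{K \<in> ?S. ?R L K}. f (cn (quot E s t M K)) *
              g (cn (quot E s t (subrep s M K) L)))"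
      proof (rule sum.cong[OF refl])
        fix K assume K: "K \<in> {K \<in> ?S. ?R L K}"
        have a: "\<And>i. L i \<subseteq> K i" "\<And>i. K i \<subseteq> fst M i" "\<And>i. 0 \<in> L i"
          using K subreps_D(2)[of K M] subreps_D(1)[OF L] by auto
        show "f (cn (quot E s t (quot E s t M L) (Kq L K))) * g (cn (subrep s (quot E s t M L) (Kq L K)))
          = f (cn (quot E s t M K)) * g (cn (quot E s t (subrep s M K) L))"
          using quot_quot[OF a] subrep_quot[OF a] by simp
      qed
      finally show "hmult E s t f g (cn (quot E s t M L)) * h (cn (subrep s M L)) =
        (\<Sum>K\<in>{K \<in> ?S. ?R L K}.
          f (cn (quot E s t M K)) * g (cn (quot E s t (subrep s M K) L)) * h (cn (subrep s M L)))"
        by (simp add: sum_distrib_right)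
    qed
    also have "\<dots> = (\<Sum>K\<in>?S. \<Sum>L\<in>{L \<in> ?S. ?R L K}.
        f (cn (quot E s t M K)) * g (cn (quot E s t (subrep s M K) L)) * h (cn (subrep s M L)))"
      by (rule sum.swap_restrict[OF fS fS])
    also have "\<dots> = (\<Sum>K\<in>?S. f (cn (quot E s t M K)) * hmult E s t g h (cn (subrep s M K)))"
    proof (rule sum.cong[OF refl])
      fix K assume K: "K \<in> ?S"
      have SK: "rrep (subrep s M K)" using rep_subrep[OF M K] .
      have "hmult E s t g h (cn (subrep s M K)) = (\<Sum>L\<in>subreps E s t (subrep s M K).
          g (cn (quot E s t (subrep s M K) L)) * h (cn (subrep s (subrep s M K) L)))"
        by (rule hmult_canon[OF SK])
      also have "\<dots> = (\<Sum>L\<in>{L \<in> ?S. ?R L K}.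
          g (cn (quot E s t (subrep s M K) L)) * h (cn (subrep s M L)))"
        unfolding subreps_subrep[OF K] by (rule sum.cong[OF refl]) (simp add: subrep_subrep)
      finally show "(\<Sum>L\<in>{L \<in> ?S. ?R L K}.
          f (cn (quot E s t M K)) * g (cn (quot E s t (subrep s M K) L)) * h (cn (subrep s M L))) =
          f (cn (quot E s t M K)) * hmult E s t g h (cn (subrep s M K))"
        by (simp add: sum_distrib_left mult.assoc)
    qed
    also have "\<dots> = hmult E s t f (hmult E s t g h) M"
      unfolding hmult_def using True by simp
    finally show ?thesis .
  qed
qed

lemma enc_0[simp]: "enc_l 0 = 0" "enc_r 0 = 0" unfolding enc_l_def enc_r_def by simp_all

lemma enc_eq[simp]: "enc_l a = enc_l b \<longleftrightarrow> a = b" "enc_r a = enc_r b \<longleftrightarrow> a = b"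
  "enc_l a = enc_r b \<longleftrightarrow> a = 0 \<and> b = 0" "enc_r b = enc_l a \<longleftrightarrow> a = 0 \<and> b = 0"
  "enc_l a = 0 \<longleftrightarrow> a = 0" "enc_r a = 0 \<longleftrightarrow> a = 0"
  unfolding enc_l_def enc_r_def by presburger+

lemma enc_pos[simp]: "0 < enc_l a \<longleftrightarrow> 0 < a" "0 < enc_r a \<longleftrightarrow> 0 < a"
  unfolding enc_l_def enc_r_def by presburger+

lemma enc_cases: obtains "x = 0" | a where "a \<noteq> 0" "x = enc_l a" | b where "b \<noteq> 0" "x = enc_r b"
proof -
  consider "x = 0" | "x \<noteq> 0" "even x" | "odd x" by blast
  then show ?thesis
  proof cases
    case 2 then have "x = enc_l (x div 2)" "x div 2 \<noteq> 0" unfolding enc_l_def by auto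
    then show ?thesis using that by blast
  next
    case 3 then have "x = enc_r ((x + 1) div 2)" "(x + 1) div 2 \<noteq> 0" unfolding enc_r_def by presburger+
    then show ?thesis using that by blast
  qed (use that in blast)
qed

lemma fst_dsum: "fst (dsum M N) i = enc_l ` fst M i \<union> enc_r ` fst N i"
  unfolding dsum_def by simp

lemma enc_l_div: "a \<noteq> 0 \<Longrightarrow> enc_l a div 2 = a" "a \<noteq> 0 \<Longrightarrow> even (enc_l a)"
  "b \<noteq> 0 \<Longrightarrow> (enc_r b + 1) div 2 = b" "b \<noteq> 0 \<Longrightarrow> odd (enc_r b)"
  unfolding enc_l_def enc_r_def by presburger+

lemma dsum_l: "rrep M \<Longrightarrow> snd (dsum M N) h (enc_l a) = enc_l (snd M h a)"
  by (cases "a = 0") (simp_all add: dsum_def repD(3) enc_l_div)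

lemma dsum_r: assumes N: "rrep N" shows "snd (dsum M N) h (enc_r b) = enc_r (snd N h b)"
proof (cases "b = 0")
  case True then show ?thesis by (simp add: dsum_def repD(3)[OF N])
next
  case False
  have a: "\<not> enc_r b = 0" using False by simp
  have b: "\<not> even (enc_r b)" using enc_l_div(4)[OF False] .
  show ?thesis unfolding dsum_def snd_conv if_not_P[OF a] if_not_P[OF b] enc_l_div(3)[OF False] ..
qed

lemma mem_dsum: "0 \<in> A \<Longrightarrow> 0 \<in> B \<Longrightarrow> enc_l a \<in> enc_l ` A \<union> enc_r ` B \<longleftrightarrow> a \<in> A"
  "0 \<in> A \<Longrightarrow> 0 \<in> B \<Longrightarrow> enc_r b \<in> enc_l ` A \<union> enc_r ` B \<longleftrightarrow> b \<in> B"
  by (cases "a = 0"; auto) (cases "b = 0"; auto)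

lemma dsum_elem: assumes "x \<in> enc_l ` A \<union> enc_r ` B"
  obtains a where "a \<in> A" "x = enc_l a" | b where "b \<in> B" "x = enc_r b"
  using assms by blast

lemma rep_dsum: assumes M: "rrep M" and N: "rrep N" shows "rrep (dsum M N)"
proof (rule repI)
  fix i show "finite (fst (dsum M N) i)" using repD(1)[OF M] repD(1)[OF N] by (simp add: fst_dsum)
  show "0 \<in> fst (dsum M N) i" using repD(2)[OF M] by (simp add: fst_dsum)
next
  fix h show "snd (dsum M N) h 0 = 0" by (simp add: dsum_def)
next
  fix h x assume h: "h \<notin> E"
  show "snd (dsum M N) h x = 0"
    by (cases x rule: enc_cases) (simp_all add: dsum_l[OF M] dsum_r[OF N] repD(6)[OF M h] repD(6)[OF N h] dsum_def)
next
  fix h x assume x: "x \<notin> fst (dsum M N) (s h)"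
  have z: "0 \<in> fst M (s h)" "0 \<in> fst N (s h)" using repD(2) M N by blast+
  show "snd (dsum M N) h x = 0"
  proof (cases x rule: enc_cases)
    case 1 then show ?thesis by (simp add: dsum_def)
  next
    case (2 a) then have "a \<notin> fst M (s h)" using x unfolding fst_dsum by blast
    then show ?thesis using 2 by (simp add: dsum_l[OF M] repD(4)[OF M])
  next
    case (3 b) then have "b \<notin> fst N (s h)" using x unfolding fst_dsum by blast
    then show ?thesis using 3 by (simp add: dsum_r[OF N] repD(4)[OF N])
  qed
next
  fix h x assume h: "h \<in> E" and x: "x \<in> fst (dsum M N) (s h)"
  from x show "snd (dsum M N) h x \<in> fst (dsum M N) (t h)"
    unfolding fst_dsum
    by (rule dsum_elem) (simp_all add: dsum_l[OF M] dsum_r[OF N] repD(5)[OF M] repD(5)[OF N])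
next
  fix h x y assume h: "h \<in> E" and x: "x \<in> fst (dsum M N) (s h)" and y: "y \<in> fst (dsum M N) (s h)"
    and eq: "snd (dsum M N) h x = snd (dsum M N) h y" and nz: "snd (dsum M N) h x \<noteq> 0"
  from x obtain a b where xa: "(a \<in> fst M (s h) \<and> x = enc_l a) \<or> (b \<in> fst N (s h) \<and> x = enc_r b)"
    unfolding fst_dsum by blast
  from y obtain a' b' where ya: "(a' \<in> fst M (s h) \<and> y = enc_l a') \<or> (b' \<in> fst N (s h) \<and> y = enc_r b')"
    unfolding fst_dsum by blast
  show "x = y"
    using xa ya eq nz repD(7)[OF M, of _ h] repD(7)[OF N, of _ h]
    by (auto simp: dsum_l[OF M] dsum_r[OF N])
qed

lemma iso_dsum_decomp:
  assumes rA: "rrep A" and rB: "rrep B" and rX: "rrep X"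
    and ia: "\<And>i. inj_on (\<alpha> i) (fst A i)" and ib: "\<And>i. inj_on (\<beta> i) (fst B i)"
    and za: "\<And>i. \<alpha> i 0 = 0" and zb: "\<And>i. \<beta> i 0 = 0"
    and fX: "\<And>i. fst X i = \<alpha> i ` fst A i \<union> \<beta> i ` fst B i"
    and disj: "\<And>i. \<alpha> i ` fst A i \<inter> \<beta> i ` fst B i \<subseteq> {0}"
    and ca: "\<And>h a. h \<in> E \<Longrightarrow> a \<in> fst A (s h) \<Longrightarrow> \<alpha> (t h) (snd A h a) = snd X h (\<alpha> (s h) a)"
    and cb: "\<And>h b. h \<in> E \<Longrightarrow> b \<in> fst B (s h) \<Longrightarrow> \<beta> (t h) (snd B h b) = snd X h (\<beta> (s h) b)"
  shows "isoR (dsum A B) X"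
proof -
  define \<phi> where "\<phi> i x = (if even x then \<alpha> i (x div 2) else \<beta> i ((x + 1) div 2))" for i x
  have pl: "\<phi> i (enc_l a) = \<alpha> i a" for i a
    by (cases "a = 0") (simp_all add: \<phi>_def za enc_l_div)
  have pr: "\<phi> i (enc_r b) = \<beta> i b" for i b
  proof (cases "b = 0")
    case True then show ?thesis by (simp add: \<phi>_def za zb)
  next
    case False
    have b: "\<not> even (enc_r b)" using enc_l_div(4)[OF False] .
    show ?thesis unfolding \<phi>_def if_not_P[OF b] enc_l_div(3)[OF False] ..
  qed
  have A0: "0 \<in> fst A i" and B0: "0 \<in> fst B i" for i using repD(2) rA rB by blast+
  have inj: "inj_on (\<phi> i) (fst (dsum A B) i)" for i
  proof (rule inj_onI)
    fix x y assume x: "x \<in> fst (dsum A B) i" and y: "y \<in> fst (dsum A B) i" and eq: "\<phi> i x = \<phi> i y"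
    have aux: "a = 0 \<and> b = 0" if a: "a \<in> fst A i" and b: "b \<in> fst B i" and e: "\<alpha> i a = \<beta> i b" for a b
    proof -
      have "\<alpha> i a \<in> {0}" using disj[of i] a b e by blast
      then have "\<alpha> i a = \<alpha> i 0" using za by simp
      then have "a = 0" using inj_onD[OF ia _ a A0] by blast
      moreover have "\<beta> i b = \<beta> i 0" using e zb \<open>\<alpha> i a \<in> {0}\<close> by simp
      then have "b = 0" using inj_onD[OF ib _ b B0] by blast
      ultimately show ?thesis by simp
    qed
    from x obtain a b where xa: "(a \<in> fst A i \<and> x = enc_l a) \<or> (b \<in> fst B i \<and> x = enc_r b)"
      unfolding fst_dsum by blast
    from y obtain a' b' where ya: "(a' \<in> fst A i \<and> y = enc_l a') \<or> (b' \<in> fst B i \<and> y = enc_r b')"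
      unfolding fst_dsum by blast
    show "x = y"
    proof -
      { assume 1: "a \<in> fst A i" "x = enc_l a" and 2: "a' \<in> fst A i" "y = enc_l a'"
        then have ?thesis using eq pl inj_onD[OF ia] by metis }
      moreover
      { assume 1: "a \<in> fst A i" "x = enc_l a" and 2: "b' \<in> fst B i" "y = enc_r b'"
        then have ?thesis using eq pl pr aux[of a b'] by simp }
      moreover
      { assume 1: "b \<in> fst B i" "x = enc_r b" and 2: "a' \<in> fst A i" "y = enc_l a'"
        then have ?thesis using eq pl pr aux[of a' b] by simp }
      moreover
      { assume 1: "b \<in> fst B i" "x = enc_r b" and 2: "b' \<in> fst B i" "y = enc_r b'"
        then have ?thesis using eq pr inj_onD[OF ib] by metis }
      ultimately show ?thesis using xa ya by blast
    qed
  qed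
  have img: "\<phi> i ` fst (dsum A B) i = fst X i" for i
  proof -
    have "\<phi> i ` fst (dsum A B) i = (\<phi> i \<circ> enc_l) ` fst A i \<union> (\<phi> i \<circ> enc_r) ` fst B i"
      unfolding fst_dsum image_Un image_comp ..
    also have "\<dots> = \<alpha> i ` fst A i \<union> \<beta> i ` fst B i"
      by (simp add: comp_def pl pr)
    finally show ?thesis using fX by simp
  qed
  show ?thesis unfolding rep_iso_def
  proof (intro conjI exI[of _ \<phi>] allI ballI)
    show "rrep (dsum A B)" using rep_dsum[OF rA rB] .
    show "rrep X" by fact
    fix i show "bij_betw (\<phi> i) (fst (dsum A B) i) (fst X i)" using inj img by (simp add: bij_betw_def)
    show "\<phi> i 0 = 0" using pl[of i 0] za by simp
  next
    fix h x assume h: "h \<in> E" and x: "x \<in> fst (dsum A B) (s h)"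
    then obtain a b where xa: "(a \<in> fst A (s h) \<and> x = enc_l a) \<or> (b \<in> fst B (s h) \<and> x = enc_r b)"
      unfolding fst_dsum by blast
    then show "\<phi> (t h) (snd (dsum A B) h x) = snd X h (\<phi> (s h) x)"
      using dsum_l[OF rA, of B] dsum_r[OF rB, of A] pl pr ca[OF h] cb[OF h] by auto
  qed
qed

lemma dsum_cong: assumes "isoR A A'" "isoR B B'" shows "isoR (dsum A B) (dsum A' B')"
proof -
  obtain \<phi> where b: "\<And>i. bij_betw (\<phi> i) (fst A i) (fst A' i)" and z: "\<And>i. \<phi> i 0 = 0"
    and c: "\<And>h x. h\<in>E \<Longrightarrow> x\<in>fst A (s h) \<Longrightarrow> \<phi> (t h) (snd A h x) = snd A' h (\<phi> (s h) x)"
    using iso_bij[OF assms(1)] by blast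
  obtain \<psi> where b2: "\<And>i. bij_betw (\<psi> i) (fst B i) (fst B' i)" and z2: "\<And>i. \<psi> i 0 = 0"
    and c2: "\<And>h x. h\<in>E \<Longrightarrow> x\<in>fst B (s h) \<Longrightarrow> \<psi> (t h) (snd B h x) = snd B' h (\<psi> (s h) x)"
    using iso_bij[OF assms(2)] by blast
  have rA': "rrep A'" and rB': "rrep B'" using assms iso_rep2 by blast+
  show ?thesis
  proof (rule iso_dsum_decomp[where \<alpha> = "\<lambda>i a. enc_l (\<phi> i a)" and \<beta> = "\<lambda>i b. enc_r (\<psi> i b)"])
    show "rrep A" "rrep B" using assms iso_rep1 by blast+
    show "rrep (dsum A' B')" using rep_dsum[OF rA' rB'] .
    fix i
    show "inj_on (\<lambda>a. enc_l (\<phi> i a)) (fst A i)" using b[of i] by (simp add: bij_betw_def inj_on_def)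
    show "inj_on (\<lambda>a. enc_r (\<psi> i a)) (fst B i)" using b2[of i] by (simp add: bij_betw_def inj_on_def)
    show "enc_l (\<phi> i 0) = 0" "enc_r (\<psi> i 0) = 0" using z z2 by simp_all
    have "\<phi> i ` fst A i = fst A' i" "\<psi> i ` fst B i = fst B' i" using b b2 by (simp_all add: bij_betw_def)
    then show "fst (dsum A' B') i = (\<lambda>a. enc_l (\<phi> i a)) ` fst A i \<union> (\<lambda>a. enc_r (\<psi> i a)) ` fst B i"
      unfolding fst_dsum by (simp add: image_image[symmetric])
    show "(\<lambda>a. enc_l (\<phi> i a)) ` fst A i \<inter> (\<lambda>a. enc_r (\<psi> i a)) ` fst B i \<subseteq> {0}" by auto
  next
    fix h a assume h: "h \<in> E" and a: "a \<in> fst A (s h)"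
    show "enc_l (\<phi> (t h) (snd A h a)) = snd (dsum A' B') h (enc_l (\<phi> (s h) a))"
      using c[OF h a] dsum_l[OF rA'] by simp
  next
    fix h a assume h: "h \<in> E" and a: "a \<in> fst B (s h)"
    show "enc_r (\<psi> (t h) (snd B h a)) = snd (dsum A' B') h (enc_r (\<psi> (s h) a))"
      using c2[OF h a] dsum_r[OF rB'] by simp
  qed
qed

lemma dsum_comm: assumes "rrep A" "rrep B" shows "isoR (dsum A B) (dsum B A)"
proof (rule iso_dsum_decomp[where \<alpha> = "\<lambda>i. enc_r" and \<beta> = "\<lambda>i. enc_l"])
  show "rrep (dsum B A)" using rep_dsum assms by blast
  fix i show "fst (dsum B A) i = enc_r ` fst A i \<union> enc_l ` fst B i" unfolding fst_dsum by blast
  show "enc_r ` fst A i \<inter> enc_l ` fst B i \<subseteq> {0}" by auto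
qed (use assms dsum_l dsum_r in \<open>auto simp: inj_on_def\<close>)

lemma dsum_zero_r: assumes "rrep A" shows "isoR (dsum A zrep) A"
proof (rule iso_dsum_decomp[where \<alpha> = "\<lambda>i a. a" and \<beta> = "\<lambda>i b. 0"])
  fix i show "fst A i = (\<lambda>a. a) ` fst A i \<union> (\<lambda>b. 0) ` fst zrep i"
    using repD(2)[OF assms] by (auto simp: zrep_def)
qed (use assms rep_zrep repD(3)[OF assms] in \<open>auto simp: zrep_def\<close>)

lemma dsum_zero_l: assumes "rrep A" shows "isoR (dsum zrep A) A"
proof (rule iso_dsum_decomp[where \<alpha> = "\<lambda>i b. 0" and \<beta> = "\<lambda>i a. a"])
  fix i show "fst A i = (\<lambda>b. 0) ` fst zrep i \<union> (\<lambda>a. a) ` fst A i"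
    using repD(2)[OF assms] by (auto simp: zrep_def)
qed (use assms rep_zrep repD(3)[OF assms] in \<open>auto simp: zrep_def\<close>)

lemma dsum_assoc: assumes rA: "rrep A" and rB: "rrep B" and rC: "rrep C"
  shows "isoR (dsum A (dsum B C)) (dsum (dsum A B) C)"
proof -
  define \<beta> where "\<beta> i y = (if even y then enc_l (enc_r (y div 2)) else enc_r ((y + 1) div 2))" for i :: 'v and y
  have bl: "\<beta> i (enc_l b) = enc_l (enc_r b)" for i b
    by (cases "b = 0") (simp_all add: \<beta>_def enc_l_div)
  have br: "\<beta> i (enc_r c) = enc_r c" for i c
  proof (cases "c = 0")
    case True then show ?thesis by (simp add: \<beta>_def)
  next
    case False
    have b: "\<not> even (enc_r c)" using enc_l_div(4)[OF False] .
    show ?thesis unfolding \<beta>_def if_not_P[OF b] enc_l_div(3)[OF False] ..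
  qed
  have rAB: "rrep (dsum A B)" and rBC: "rrep (dsum B C)" using rep_dsum assms by blast+
  show ?thesis
  proof (rule iso_dsum_decomp[where \<alpha> = "\<lambda>i a. enc_l (enc_l a)" and \<beta> = \<beta>])
    show "rrep (dsum (dsum A B) C)" using rep_dsum[OF rAB rC] .
    fix i
    show "inj_on (\<lambda>a. enc_l (enc_l a)) (fst A i)" by (simp add: inj_on_def)
    show "inj_on (\<beta> i) (fst (dsum B C) i)"
      unfolding fst_dsum inj_on_def by (auto simp: bl br)
    show "enc_l (enc_l 0) = 0" by simp
    show "\<beta> i 0 = 0" by (simp add: \<beta>_def)
    have "\<beta> i ` fst (dsum B C) i = enc_l ` enc_r ` fst B i \<union> enc_r ` fst C i"
      unfolding fst_dsum image_Un image_image bl br ..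
    then show "fst (dsum (dsum A B) C) i = (\<lambda>a. enc_l (enc_l a)) ` fst A i \<union> \<beta> i ` fst (dsum B C) i"
      unfolding fst_dsum by (simp add: image_Un image_image Un_assoc)
    show "(\<lambda>a. enc_l (enc_l a)) ` fst A i \<inter> \<beta> i ` fst (dsum B C) i \<subseteq> {0}"
      unfolding fst_dsum by (auto simp: bl br)
  next
    fix h a assume "h \<in> E" "a \<in> fst A (s h)"
    show "enc_l (enc_l (snd A h a)) = snd (dsum (dsum A B) C) h (enc_l (enc_l a))"
      by (simp add: dsum_l[OF rAB] dsum_l[OF rA])
  next
    fix h y assume h: "h \<in> E" and y: "y \<in> fst (dsum B C) (s h)"
    then obtain b c where ya: "(b \<in> fst B (s h) \<and> y = enc_l b) \<or> (c \<in> fst C (s h) \<and> y = enc_r c)"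
      unfolding fst_dsum by blast
    then show "\<beta> (t h) (snd (dsum B C) h y) = snd (dsum (dsum A B) C) h (\<beta> (s h) y)"
      by (auto simp: bl br dsum_l[OF rB] dsum_r[OF rC] dsum_l[OF rAB] dsum_r[OF rB] dsum_r[OF rC])
  qed (use rA rBC in auto)
qed

definition LS :: "('v \<Rightarrow> nat set) \<Rightarrow> ('v \<Rightarrow> nat set) \<Rightarrow> 'v \<Rightarrow> nat set" where
  "LS L1 L2 = (\<lambda>i. enc_l ` L1 i \<union> enc_r ` L2 i)"

lemma LS_subreps: assumes rA: "rrep A" and rB: "rrep B" and L1: "L1 \<in> subreps E s t A" and L2: "L2 \<in> subreps E s t B"
  shows "LS L1 L2 \<in> subreps E s t (dsum A B)"
proof (rule subreps_I)
  fix i show "0 \<in> LS L1 L2 i" using subreps_D(1)[OF L1] by (simp add: LS_def) 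
  show "LS L1 L2 i \<subseteq> fst (dsum A B) i" using subreps_D(2)[OF L1] subreps_D(2)[OF L2]
    unfolding LS_def fst_dsum by blast
next
  fix h x assume h: "h \<in> E" and x: "x \<in> LS L1 L2 (s h)"
  then obtain a b where xa: "(a \<in> L1 (s h) \<and> x = enc_l a) \<or> (b \<in> L2 (s h) \<and> x = enc_r b)"
    unfolding LS_def by blast
  then show "snd (dsum A B) h x \<in> LS L1 L2 (t h)"
    using subreps_D(3)[OF L1 h] subreps_D(3)[OF L2 h] unfolding LS_def
    by (auto simp: dsum_l[OF rA] dsum_r[OF rB])
qed

lemma LS_bij: assumes rA: "rrep A" and rB: "rrep B"
  shows "bij_betw (\<lambda>(L1, L2). LS L1 L2) (subreps E s t A \<times> subreps E s t B) (subreps E s t (dsum A B))"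
proof (rule bij_betw_byWitness[where f' = "\<lambda>L. (\<lambda>i. {a. enc_l a \<in> L i}, \<lambda>i. {b. enc_r b \<in> L i})"])
  show "\<forall>p\<in>subreps E s t A \<times> subreps E s t B.
     (\<lambda>L. (\<lambda>i. {a. enc_l a \<in> L i}, \<lambda>i. {b. enc_r b \<in> L i})) (case p of (L1, L2) \<Rightarrow> LS L1 L2) = p"
  proof
    fix p assume "p \<in> subreps E s t A \<times> subreps E s t B"
    then obtain L1 L2 where p: "p = (L1, L2)" and L1: "L1 \<in> subreps E s t A" and L2: "L2 \<in> subreps E s t B" by blast
    have z: "0 \<in> L1 i" "0 \<in> L2 i" for i using subreps_D(1) L1 L2 by blast+
    have "(\<lambda>i. {a. enc_l a \<in> LS L1 L2 i}, \<lambda>i. {b. enc_r b \<in> LS L1 L2 i}) = (L1, L2)"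
      unfolding LS_def using mem_dsum[OF z] by auto
    then show "(\<lambda>L. (\<lambda>i. {a. enc_l a \<in> L i}, \<lambda>i. {b. enc_r b \<in> L i})) (case p of (L1, L2) \<Rightarrow> LS L1 L2) = p"
      using p by simp
  qed
  show "\<forall>L\<in>subreps E s t (dsum A B). (case (\<lambda>i. {a. enc_l a \<in> L i}, \<lambda>i. {b. enc_r b \<in> L i}) of (L1, L2) \<Rightarrow> LS L1 L2) = L"
  proof
    fix L assume L: "L \<in> subreps E s t (dsum A B)"
    show "(case (\<lambda>i. {a. enc_l a \<in> L i}, \<lambda>i. {b. enc_r b \<in> L i}) of (L1, L2) \<Rightarrow> LS L1 L2) = L"
    proof (simp, rule ext)
      fix i
      show "LS (\<lambda>i. {a. enc_l a \<in> L i}) (\<lambda>i. {b. enc_r b \<in> L i}) i = L i"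
        unfolding LS_def using subreps_D(2)[OF L, of i] unfolding fst_dsum by blast
    qed
  qed
  show "(\<lambda>(L1, L2). LS L1 L2) ` (subreps E s t A \<times> subreps E s t B) \<subseteq> subreps E s t (dsum A B)"
    using LS_subreps[OF rA rB] by auto
  show "(\<lambda>L. (\<lambda>i. {a. enc_l a \<in> L i}, \<lambda>i. {b. enc_r b \<in> L i})) ` subreps E s t (dsum A B)
      \<subseteq> subreps E s t A \<times> subreps E s t B"
  proof (rule image_subsetI)
    fix L assume L: "L \<in> subreps E s t (dsum A B)"
    have zA: "0 \<in> fst A i" and zB: "0 \<in> fst B i" for i using repD(2) rA rB by blast+
    have LD: "L i \<subseteq> enc_l ` fst A i \<union> enc_r ` fst B i" for i using subreps_D(2)[OF L] unfolding fst_dsum .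
    have 1: "(\<lambda>i. {a. enc_l a \<in> L i}) \<in> subreps E s t A"
    proof (rule subreps_I)
      fix i show "0 \<in> {a. enc_l a \<in> L i}" using subreps_D(1)[OF L] by simp
      show "{a. enc_l a \<in> L i} \<subseteq> fst A i" using LD[of i] mem_dsum(1)[OF zA zB] by blast
    next
      fix h x assume h: "h \<in> E" and x: "x \<in> {a. enc_l a \<in> L (s h)}"
      then show "snd A h x \<in> {a. enc_l a \<in> L (t h)}" using subreps_D(3)[OF L h, of "enc_l x"] dsum_l[OF rA, of B h x] by simp
    qed
    have 2: "(\<lambda>i. {b. enc_r b \<in> L i}) \<in> subreps E s t B"
    proof (rule subreps_I)
      fix i show "0 \<in> {b. enc_r b \<in> L i}" using subreps_D(1)[OF L] by simp
      show "{b. enc_r b \<in> L i} \<subseteq> fst B i" using LD[of i] mem_dsum(2)[OF zA zB] by blast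
    next
      fix h x assume h: "h \<in> E" and x: "x \<in> {b. enc_r b \<in> L (s h)}"
      then show "snd B h x \<in> {b. enc_r b \<in> L (t h)}" using subreps_D(3)[OF L h, of "enc_r x"] dsum_r[OF rB, of A h x] by simp
    qed
    show "(\<lambda>i. {a. enc_l a \<in> L i}, \<lambda>i. {b. enc_r b \<in> L i}) \<in> subreps E s t A \<times> subreps E s t B"
      using 1 2 by simp
  qed
qed

lemma quot_dsum: assumes rA: "rrep A" and rB: "rrep B" and L1: "L1 \<in> subreps E s t A" and L2: "L2 \<in> subreps E s t B"
  shows "quot E s t (dsum A B) (LS L1 L2) = dsum (quot E s t A L1) (quot E s t B L2)"
proof -
  have z: "0 \<in> L1 i" "0 \<in> L2 i" for i using subreps_D(1) L1 L2 by blast+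
  have s1: "L1 i \<subseteq> fst A i" "L2 i \<subseteq> fst B i" for i using subreps_D(2) L1 L2 by blast+
  have zA: "0 \<in> fst A i" and zB: "0 \<in> fst B i" for i using repD(2) rA rB by blast+
  have rQ1: "rrep (quot E s t A L1)" and rQ2: "rrep (quot E s t B L2)" using rep_quot rA rB L1 L2 by blast+
  have fe: "fst (quot E s t (dsum A B) (LS L1 L2)) i = fst (dsum (quot E s t A L1) (quot E s t B L2)) i" for i
  proof -
    have "fst (quot E s t (dsum A B) (LS L1 L2)) i = (enc_l ` fst A i \<union> enc_r ` fst B i - (enc_l ` L1 i \<union> enc_r ` L2 i)) \<union> {0}"
      unfolding quot_def LS_def fst_dsum by simp
    also have "\<dots> = enc_l ` ((fst A i - L1 i) \<union> {0}) \<union> enc_r ` ((fst B i - L2 i) \<union> {0})"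
      using z[of i] zA[of i] zB[of i] by (auto simp: image_iff)
    finally show ?thesis unfolding fst_dsum quot_def by simp
  qed
  show ?thesis
  proof (rule rep_eqI)
    show "rrep (quot E s t (dsum A B) (LS L1 L2))" using rep_quot[OF rep_dsum[OF rA rB] LS_subreps[OF rA rB L1 L2]] .
    show "rrep (dsum (quot E s t A L1) (quot E s t B L2))" using rep_dsum[OF rQ1 rQ2] .
    show "fst (quot E s t (dsum A B) (LS L1 L2)) = fst (dsum (quot E s t A L1) (quot E s t B L2))"
      using fe by (rule ext)
  next
    fix h x assume h: "h \<in> E" and x: "x \<in> fst (quot E s t (dsum A B) (LS L1 L2)) (s h)"
    have m1: "enc_l a \<in> LS L1 L2 j \<longleftrightarrow> a \<in> L1 j" "enc_r b \<in> LS L1 L2 j \<longleftrightarrow> b \<in> L2 j" for a b j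
      unfolding LS_def using mem_dsum[OF z] by blast+
    have m2: "enc_l a \<in> fst (dsum A B) j \<longleftrightarrow> a \<in> fst A j" "enc_r b \<in> fst (dsum A B) j \<longleftrightarrow> b \<in> fst B j" for a b j
      unfolding fst_dsum using mem_dsum[OF zA zB] by blast+
    show "snd (quot E s t (dsum A B) (LS L1 L2)) h x = snd (dsum (quot E s t A L1) (quot E s t B L2)) h x"
    proof (cases x rule: enc_cases)
      case 1 then show ?thesis using repD(3)[OF rep_quot[OF rep_dsum[OF rA rB] LS_subreps[OF rA rB L1 L2]]]
          repD(3)[OF rep_dsum[OF rQ1 rQ2]] by simp
    next
      case (2 a)
      show ?thesis unfolding 2 dsum_l[OF rQ1] unfolding quot_def snd_conv fst_conv
        using m1 m2 dsum_l[OF rA, of B] z by auto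
    next
      case (3 b)
      show ?thesis unfolding 3 dsum_r[OF rQ2] unfolding quot_def snd_conv fst_conv
        using m1 m2 dsum_r[OF rB, of A] z by auto
    qed
  qed
qed

lemma subrep_dsum: assumes rA: "rrep A" and rB: "rrep B" and L1: "L1 \<in> subreps E s t A" and L2: "L2 \<in> subreps E s t B"
  shows "subrep s (dsum A B) (LS L1 L2) = dsum (subrep s A L1) (subrep s B L2)"
proof -
  have z: "0 \<in> L1 i" "0 \<in> L2 i" for i using subreps_D(1) L1 L2 by blast+
  have rQ1: "rrep (subrep s A L1)" and rQ2: "rrep (subrep s B L2)" using rep_subrep rA rB L1 L2 by blast+
  show ?thesis
  proof (rule rep_eqI)
    show "rrep (subrep s (dsum A B) (LS L1 L2))" using rep_subrep[OF rep_dsum[OF rA rB] LS_subreps[OF rA rB L1 L2]] .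
    show "rrep (dsum (subrep s A L1) (subrep s B L2))" using rep_dsum[OF rQ1 rQ2] .
    show "fst (subrep s (dsum A B) (LS L1 L2)) = fst (dsum (subrep s A L1) (subrep s B L2))"
      unfolding subrep_def fst_conv dsum_def LS_def ..
  next
    fix h x assume h: "h \<in> E" and x: "x \<in> fst (subrep s (dsum A B) (LS L1 L2)) (s h)"
    have m1: "enc_l a \<in> LS L1 L2 j \<longleftrightarrow> a \<in> L1 j" "enc_r b \<in> LS L1 L2 j \<longleftrightarrow> b \<in> L2 j" for a b j
      unfolding LS_def using mem_dsum[OF z] by blast+
    show "snd (subrep s (dsum A B) (LS L1 L2)) h x = snd (dsum (subrep s A L1) (subrep s B L2)) h x"
    proof (cases x rule: enc_cases)
      case 1 then show ?thesis using repD(3)[OF rep_subrep[OF rep_dsum[OF rA rB] LS_subreps[OF rA rB L1 L2]]]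
          repD(3)[OF rep_dsum[OF rQ1 rQ2]] by simp
    next
      case (2 a)
      show ?thesis unfolding 2 dsum_l[OF rQ1] unfolding subrep_def snd_conv
        using m1 dsum_l[OF rA, of B] by auto
    next
      case (3 b)
      show ?thesis unfolding 3 dsum_r[OF rQ2] unfolding subrep_def snd_conv
        using m1 dsum_r[OF rB, of A] by auto
    qed
  qed
qed

lemma canon_dsum_canon: assumes "rrep X" "rrep Y" shows "cn (dsum (cn X) (cn Y)) = cn (dsum X Y)"
  by (rule canon_eq[OF dsum_cong]) (use assms canon_iso iso_sym in blast)+

lemma comult_mult: "hcomult E s t (hmult E s t f g) = hmult2 E s t (hcomult E s t f) (hcomult E s t g)"
proof (rule ext, clarify)
  fix A B
  show "hcomult E s t (hmult E s t f g) (A, B) = hmult2 E s t (hcomult E s t f) (hcomult E s t g) (A, B)"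
  proof (cases "A \<in> IQ \<and> B \<in> IQ")
    case False then show ?thesis unfolding hcomult_def hmult2_def by auto
  next
    case True
    then have rA: "rrep A" and rB: "rrep B" using IQ_rep by blast+
    let ?D = "dsum A B"
    have rD: "rrep ?D" using rep_dsum[OF rA rB] .
    have "hcomult E s t (hmult E s t f g) (A, B) = hmult E s t f g (cn ?D)"
      unfolding hcomult_def using True by simp
    also have "\<dots> = (\<Sum>L\<in>subreps E s t ?D. f (cn (quot E s t ?D L)) * g (cn (subrep s ?D L)))"
      by (rule hmult_canon[OF rD])
    also have "\<dots> = (\<Sum>p\<in>subreps E s t A \<times> subreps E s t B.
        (\<lambda>L. f (cn (quot E s t ?D L)) * g (cn (subrep s ?D L))) ((\<lambda>(L1, L2). LS L1 L2) p))"
      by (rule sum.reindex_bij_betw[OF LS_bij[OF rA rB], symmetric])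
    also have "\<dots> = (\<Sum>(L1, L2)\<in>subreps E s t A \<times> subreps E s t B.
        f (cn (quot E s t ?D (LS L1 L2))) * g (cn (subrep s ?D (LS L1 L2))))"
      by (rule sum.cong[OF refl]) (auto split: prod.split)
    also have "\<dots> = (\<Sum>L1\<in>subreps E s t A. \<Sum>L2\<in>subreps E s t B.
        f (cn (quot E s t ?D (LS L1 L2))) * g (cn (subrep s ?D (LS L1 L2))))"
      by (rule sum.cartesian_product[symmetric])
    also have "\<dots> = hmult2 E s t (hcomult E s t f) (hcomult E s t g) (A, B)"
      unfolding hmult2_def using True
    proof (simp, intro sum.cong refl)
      fix L1 L2 assume L1: "L1 \<in> subreps E s t A" and L2: "L2 \<in> subreps E s t B"
      have q1: "rrep (quot E s t A L1)" and q2: "rrep (quot E s t B L2)"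
        and s1: "rrep (subrep s A L1)" and s2: "rrep (subrep s B L2)"
        using rep_quot rep_subrep rA rB L1 L2 by blast+
      show "f (cn (quot E s t ?D (LS L1 L2))) * g (cn (subrep s ?D (LS L1 L2))) =
        hcomult E s t f (cn (quot E s t A L1), cn (quot E s t B L2)) *
        hcomult E s t g (cn (subrep s A L1), cn (subrep s B L2))"
        unfolding hcomult_def using canon_IQ[OF q1] canon_IQ[OF q2] canon_IQ[OF s1] canon_IQ[OF s2]
          canon_dsum_canon[OF q1 q2] canon_dsum_canon[OF s1 s2]
          quot_dsum[OF rA rB L1 L2] subrep_dsum[OF rA rB L1 L2] by simp
    qed
    finally show ?thesis .
  qed
qed

lemma card_quot: assumes M: "rrep M" and L: "L \<in> subreps E s t M"
  shows "card (fst (quot E s t M L) i) + card (L i) = card (fst M i) + 1"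
proof -
  have fM: "finite (fst M i)" using repD(1)[OF M] .
  have LM: "L i \<subseteq> fst M i" and z: "0 \<in> L i" using subreps_D L by blast+
  have fL: "finite (L i)" using finite_subset[OF LM fM] .
  have "fst (quot E s t M L) i = insert 0 (fst M i - L i)" unfolding quot_def by auto
  then have "card (fst (quot E s t M L) i) = card (fst M i - L i) + 1"
    using z fM by (simp add: card_insert_if)
  moreover have "card (fst M i - L i) = card (fst M i) - card (L i)" using card_Diff_subset[OF fL LM] .
  moreover have "card (L i) \<le> card (fst M i)" using card_mono[OF fM LM] .
  ultimately show ?thesis by simp
qed

lemma card_subrep: "card (fst (subrep s M L) i) = card (L i)"
  unfolding subrep_def by simp

lemma card_dsum: assumes A: "rrep A" and B: "rrep B"
  shows "card (fst (dsum A B) i) + 1 = card (fst A i) + card (fst B i)"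
proof -
  have fA: "finite (fst A i)" and fB: "finite (fst B i)" using repD(1) A B by blast+
  have zA: "0 \<in> fst A i" and zB: "0 \<in> fst B i" using repD(2) A B by blast+
  have int: "enc_l ` fst A i \<inter> enc_r ` fst B i = {0}" using zA zB by force
  have "card (enc_l ` fst A i \<union> enc_r ` fst B i) + card (enc_l ` fst A i \<inter> enc_r ` fst B i)
      = card (enc_l ` fst A i) + card (enc_r ` fst B i)"
    by (rule card_Un_Int[symmetric]) (use fA fB in auto)
  moreover have "card (enc_l ` fst A i) = card (fst A i)" "card (enc_r ` fst B i) = card (fst B i)"
    by (simp_all add: card_image inj_on_def)
  ultimately show ?thesis using int unfolding fst_dsum by simp
qed

lemma card_pos: "rrep X \<Longrightarrow> card (fst X i) \<ge> 1"
  using repD(1,2) by (metis card_0_eq empty_iff less_one not_le)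

definition transp :: "('v,'e) rep \<Rightarrow> ('v \<Rightarrow> nat \<Rightarrow> nat) \<Rightarrow> ('v,'e) rep" where
  "transp X \<phi> = (\<lambda>i. \<phi> i ` fst X i, \<lambda>h y. if h \<in> E \<and> y \<in> \<phi> (s h) ` fst X (s h)
      then \<phi> (t h) (snd X h (the_inv_into (fst X (s h)) (\<phi> (s h)) y)) else 0)"

lemma transp_iso: assumes X: "rrep X" and inj: "\<And>i. inj_on (\<phi> i) (fst X i)" and z: "\<And>i. \<phi> i 0 = 0"
  shows "isoR X (transp X \<phi>)"
proof -
  have inv: "the_inv_into (fst X i) (\<phi> i) (\<phi> i x) = x" if "x \<in> fst X i" for i x
    using the_inv_into_f_f[OF inj that] .
  have tv: "snd (transp X \<phi>) h (\<phi> (s h) x) = \<phi> (t h) (snd X h x)" if "h \<in> E" "x \<in> fst X (s h)" for h x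
    unfolding transp_def using that inv by auto
  have rT: "rrep (transp X \<phi>)"
  proof (rule repI)
    fix i show "finite (fst (transp X \<phi>) i)" unfolding transp_def using repD(1)[OF X] by simp
    show "0 \<in> fst (transp X \<phi>) i" unfolding transp_def using repD(2)[OF X] z by (metis fst_conv image_eqI)
  next
    fix h x assume "h \<notin> E" then show "snd (transp X \<phi>) h x = 0" unfolding transp_def by simp
  next
    fix h x assume "x \<notin> fst (transp X \<phi>) (s h)" then show "snd (transp X \<phi>) h x = 0"
      unfolding transp_def by simp
  next
    fix h x assume h: "h \<in> E" and x: "x \<in> fst (transp X \<phi>) (s h)"
    then obtain y where y: "y \<in> fst X (s h)" "x = \<phi> (s h) y" unfolding transp_def by auto
    then show "snd (transp X \<phi>) h x \<in> fst (transp X \<phi>) (t h)"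
      using tv[OF h y(1)] repD(5)[OF X y(1)] unfolding transp_def by auto
  next
    fix h show "snd (transp X \<phi>) h 0 = 0"
    proof (cases "h \<in> E")
      case True
      have "snd (transp X \<phi>) h (\<phi> (s h) 0) = \<phi> (t h) (snd X h 0)" using tv[OF True repD(2)[OF X]] .
      then show ?thesis using z repD(3)[OF X] by simp
    qed (simp add: transp_def)
  next
    fix h x y assume h: "h \<in> E" and x: "x \<in> fst (transp X \<phi>) (s h)" and y: "y \<in> fst (transp X \<phi>) (s h)"
      and eq: "snd (transp X \<phi>) h x = snd (transp X \<phi>) h y" and nz: "snd (transp X \<phi>) h x \<noteq> 0"
    obtain a where a: "a \<in> fst X (s h)" "x = \<phi> (s h) a" using x unfolding transp_def by auto
    obtain b where b: "b \<in> fst X (s h)" "y = \<phi> (s h) b" using y unfolding transp_def by auto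
    have e: "\<phi> (t h) (snd X h a) = \<phi> (t h) (snd X h b)" using eq tv[OF h a(1)] tv[OF h b(1)] a b by simp
    have e2: "snd X h a = snd X h b" using inj_onD[OF inj e repD(5)[OF X a(1)] repD(5)[OF X b(1)]] .
    have "snd X h a \<noteq> 0"
    proof
      assume "snd X h a = 0"
      then show False using nz tv[OF h a(1)] a z by simp
    qed
    then have "a = b" using repD(7)[OF X a(1) b(1) e2] by simp
    then show "x = y" using a b by simp
  qed
  show ?thesis unfolding rep_iso_def
  proof (intro conjI exI[of _ \<phi>] allI ballI)
    show "rrep X" "rrep (transp X \<phi>)" by fact+
    fix i show "bij_betw (\<phi> i) (fst X i) (fst (transp X \<phi>) i)" unfolding transp_def
      using inj by (simp add: inj_on_imp_bij_betw)
    show "\<phi> i 0 = 0" by fact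
  next
    fix h x assume "h \<in> E" "x \<in> fst X (s h)" then show "\<phi> (t h) (snd X h x) = snd (transp X \<phi>) h (\<phi> (s h) x)"
      using tv by simp
  qed
qed

lemma relabel: assumes X: "rrep X"
  shows "\<exists>Y. isoR X Y \<and> (\<forall>i. fst Y i = {..<card (fst X i)})"
proof -
  have "\<exists>g. bij_betw g (fst X i) {..<card (fst X i)} \<and> g 0 = 0" for i
  proof -
    have fX: "finite (fst X i)" and z: "0 \<in> fst X i" using repD(1,2)[OF X] by auto
    obtain h where h: "bij_betw h (fst X i - {0}) {0..<card (fst X i - {0})}"
      using ex_bij_betw_finite_nat[of "fst X i - {0}"] fX by blast
    define g where "g x = (if x = 0 then 0 else Suc (h x))" for x
    have c: "card (fst X i - {0}) = card (fst X i) - 1" using z fX by simp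
    have c1: "card (fst X i) \<ge> 1" using card_pos[OF X] .
    have hi: "inj_on h (fst X i - {0})" using h unfolding bij_betw_def by blast
    have "inj_on g (fst X i)"
    proof (rule inj_onI)
      fix x y assume x: "x \<in> fst X i" and y: "y \<in> fst X i" and e: "g x = g y"
      show "x = y"
      proof (cases "x = 0 \<or> y = 0")
        case True then show ?thesis using e unfolding g_def by (auto split: if_splits)
      next
        case False
        then have "h x = h y" using e unfolding g_def by simp
        then show ?thesis using inj_onD[OF hi] x y False by blast
      qed
    qed
    moreover have "g ` fst X i = {..<card (fst X i)}"
    proof
      show "g ` fst X i \<subseteq> {..<card (fst X i)}"
      proof (rule image_subsetI)
        fix x assume x: "x \<in> fst X i"
        show "g x \<in> {..<card (fst X i)}"
        proof (cases "x = 0")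
          case True then show ?thesis using c1 unfolding g_def by simp
        next
          case False
          then have "h x \<in> {0..<card (fst X i - {0})}" using h x unfolding bij_betw_def by blast
          then show ?thesis using False c c1 unfolding g_def by auto
        qed
      qed
      show "{..<card (fst X i)} \<subseteq> g ` fst X i"
      proof
        fix y assume y: "y \<in> {..<card (fst X i)}"
        show "y \<in> g ` fst X i"
        proof (cases y)
          case 0 then have "y = g 0" unfolding g_def by simp
          then show ?thesis using z by blast
        next
          case (Suc k)
          then have "k < card (fst X i) - 1" using y by simp
          then have "k \<in> {0..<card (fst X i - {0})}" unfolding c atLeastLessThan_iff by (rule conjI[OF le0])
          moreover have "h ` (fst X i - {0}) = {0..<card (fst X i - {0})}" using h unfolding bij_betw_def by (rule conjunct2)
          ultimately have "k \<in> h ` (fst X i - {0})" by simp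
          then obtain x where "x \<in> fst X i - {0}" "h x = k" by (rule imageE) simp
          then have "y = g x" using Suc unfolding g_def by auto
          then show ?thesis using \<open>x \<in> fst X i - {0}\<close> by blast
        qed
      qed
    qed
    moreover have "g 0 = 0" unfolding g_def by simp
    ultimately show ?thesis unfolding bij_betw_def by blast
  qed
  then have "\<forall>i. \<exists>g. bij_betw g (fst X i) {..<card (fst X i)} \<and> g 0 = 0" by blast
  then obtain \<phi> where \<phi>: "\<And>i. bij_betw (\<phi> i) (fst X i) {..<card (fst X i)} \<and> \<phi> i 0 = 0"
    using choice[of "\<lambda>i g. bij_betw g (fst X i) {..<card (fst X i)} \<and> g 0 = 0"] by blast
  have "isoR X (transp X \<phi>)" using transp_iso[OF X] \<phi> unfolding bij_betw_def by blast
  moreover have "fst (transp X \<phi>) i = {..<card (fst X i)}" for i using \<phi>[of i] unfolding transp_def bij_betw_def by simp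
  ultimately show ?thesis by blast
qed

lemma finite_R: assumes fE: "finite E" shows "finite {Y. rrep Y \<and> (\<forall>i. fst Y i \<subseteq> {..<n})}"
proof -
  define G where "G = {\<phi>::nat\<Rightarrow>nat. \<forall>x. (x \<in> {..<n} \<longrightarrow> \<phi> x \<in> {..<n}) \<and> (x \<notin> {..<n} \<longrightarrow> \<phi> x = 0)}"
  define F1 where "F1 = {f::'v \<Rightarrow> nat set. \<forall>x. (x \<in> UNIV \<longrightarrow> f x \<in> Pow {..<n}) \<and> (x \<notin> UNIV \<longrightarrow> f x = {})}"
  define F2 where "F2 = {g::'e \<Rightarrow> nat \<Rightarrow> nat. \<forall>h. (h \<in> E \<longrightarrow> g h \<in> G) \<and> (h \<notin> E \<longrightarrow> g h = (\<lambda>x. 0))}"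
  have fG: "finite G" unfolding G_def by (rule finite_set_of_finite_funs) auto
  have f1: "finite F1" unfolding F1_def by (rule finite_set_of_finite_funs) auto
  have f2: "finite F2" unfolding F2_def by (rule finite_set_of_finite_funs[OF fE fG])
  have "{Y. rrep Y \<and> (\<forall>i. fst Y i \<subseteq> {..<n})} \<subseteq> F1 \<times> F2"
  proof
    fix Y assume "Y \<in> {Y. rrep Y \<and> (\<forall>i. fst Y i \<subseteq> {..<n})}"
    then have Y: "rrep Y" and sub: "\<And>i. fst Y i \<subseteq> {..<n}" by auto
    have "fst Y \<in> F1" unfolding F1_def using sub by auto
    moreover have "snd Y \<in> F2" unfolding F2_def
    proof (intro CollectI allI conjI impI)
      fix h assume "h \<notin> E" then show "snd Y h = (\<lambda>x. 0)" using repD(6)[OF Y] by (intro ext) simp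
    next
      fix h assume h: "h \<in> E"
      show "snd Y h \<in> G" unfolding G_def
      proof (intro CollectI allI conjI impI)
        fix x assume x: "x \<in> {..<n}"
        show "snd Y h x \<in> {..<n}"
        proof (cases "x \<in> fst Y (s h)")
          case True then show ?thesis using repD(5)[OF Y True] sub by blast
        next
          case False then have "snd Y h x = 0" using repD(4)[OF Y] by blast
          then show ?thesis using x by simp
        qed
      next
        fix x assume x: "x \<notin> {..<n}"
        then have "x \<notin> fst Y (s h)" using sub by blast
        then show "snd Y h x = 0" using repD(4)[OF Y] by blast
      qed
    qed
    ultimately show "Y \<in> F1 \<times> F2" by (simp add: mem_Times_iff)
  qed
  then show ?thesis using finite_subset f1 f2 by blast
qed

lemma finite_bounded: assumes fE: "finite E" shows "finite {X \<in> IQ. \<forall>i. card (fst X i) \<le> n}"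
proof -
  have "{X \<in> IQ. \<forall>i. card (fst X i) \<le> n} \<subseteq> cn ` {Y. rrep Y \<and> (\<forall>i. fst Y i \<subseteq> {..<n})}"
  proof
    fix X assume "X \<in> {X \<in> IQ. \<forall>i. card (fst X i) \<le> n}"
    then have X: "X \<in> IQ" and c: "\<And>i. card (fst X i) \<le> n" by auto
    obtain Y where Y: "isoR X Y" "\<And>i. fst Y i = {..<card (fst X i)}" using relabel[OF IQ_rep[OF X]] by blast
    have "rrep Y" using iso_rep2[OF Y(1)] .
    moreover have "fst Y i \<subseteq> {..<n}" for i using Y(2)[of i] c[of i] by auto
    ultimately have "rrep Y \<and> (\<forall>i. fst Y i \<subseteq> {..<n})" by blast
    moreover have "X = cn Y" using canon_eq[OF Y(1)] canon_idem[OF X] by simp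
    ultimately show "X \<in> cn ` {Y. rrep Y \<and> (\<forall>i. fst Y i \<subseteq> {..<n})}" by blast
  qed
  then show ?thesis by (rule finite_subset) (rule finite_imageI[OF finite_R[OF fE]])
qed

lemma supp_bound: fixes S :: "('v,'e) rep set" assumes "finite S" shows "\<exists>n. \<forall>X\<in>S. \<forall>i. card (fst X i) \<le> n"
proof -
  have "finite ((\<lambda>(X, i). card (fst X i)) ` (S \<times> (UNIV :: 'v set)))" using assms by simp
  then obtain n where "\<forall>k\<in>(\<lambda>(X, i). card (fst X i)) ` (S \<times> (UNIV :: 'v set)). k \<le> n"
    using finite_nat_set_iff_bounded_le by blast
  then have "card (fst X i) \<le> n" if "X \<in> S" for X i using that by (metis (mono_tags) SigmaI UNIV_I case_prod_conv image_eqI)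
  then show ?thesis by blast
qed

lemma hmult_nz: assumes "hmult E s t f g M \<noteq> 0"
  shows "M \<in> IQ \<and> (\<exists>L\<in>subreps E s t M. f (cn (quot E s t M L)) \<noteq> 0 \<and> g (cn (subrep s M L)) \<noteq> 0)"
proof (cases "M \<in> IQ")
  case False then show ?thesis using assms unfolding hmult_def by simp
next
  case True
  then have "(\<Sum>L\<in>subreps E s t M. f (cn (quot E s t M L)) * g (cn (subrep s M L))) \<noteq> 0"
    using assms unfolding hmult_def by simp
  then obtain L where "L \<in> subreps E s t M" "f (cn (quot E s t M L)) * g (cn (subrep s M L)) \<noteq> 0"
    using sum.not_neutral_contains_not_neutral by blast
  then show ?thesis using True by auto
qed

lemma HQ_D: "f \<in> HQ E s t \<Longrightarrow> f X \<noteq> 0 \<Longrightarrow> X \<in> IQ" "f \<in> HQ E s t \<Longrightarrow> finite {X. f X \<noteq> 0}"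
  unfolding HQ_def by blast+

lemma hmult_HQ: assumes fE: "finite E" and f: "f \<in> HQ E s t" and g: "g \<in> HQ E s t"
  shows "hmult E s t f g \<in> HQ E s t"
proof -
  obtain n where n: "\<And>X i. X \<in> {X. f X \<noteq> 0} \<union> {X. g X \<noteq> 0} \<Longrightarrow> card (fst X i) \<le> n"
    using supp_bound[of "{X. f X \<noteq> 0} \<union> {X. g X \<noteq> 0}"] HQ_D(2)[OF f] HQ_D(2)[OF g] by blast
  have "{M. hmult E s t f g M \<noteq> 0} \<subseteq> {X \<in> IQ. \<forall>i. card (fst X i) \<le> n + n}"
  proof
    fix M assume "M \<in> {M. hmult E s t f g M \<noteq> 0}"
    then obtain L where M: "M \<in> IQ" and L: "L \<in> subreps E s t M"
      and nf: "f (cn (quot E s t M L)) \<noteq> 0" and ng: "g (cn (subrep s M L)) \<noteq> 0"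
      using hmult_nz by blast
    have rM: "rrep M" using IQ_rep[OF M] .
    have "card (fst M i) \<le> n + n" for i
    proof -
      have "card (fst (quot E s t M L) i) = card (fst (cn (quot E s t M L)) i)"
        using iso_card[OF canon_iso[OF rep_quot[OF rM L]]] .
      also have "\<dots> \<le> n" using n nf by blast
      finally have 1: "card (fst (quot E s t M L) i) \<le> n" .
      have "card (L i) = card (fst (cn (subrep s M L)) i)"
        using iso_card[OF canon_iso[OF rep_subrep[OF rM L]]] card_subrep by simp
      also have "\<dots> \<le> n" using n ng by blast
      finally have 2: "card (L i) \<le> n" .
      show ?thesis using card_quot[OF rM L, of i] 1 2 by simp
    qed
    then show "M \<in> {X \<in> IQ. \<forall>i. card (fst X i) \<le> n + n}" using M by blast
  qed
  then have "finite {M. hmult E s t f g M \<noteq> 0}" using finite_bounded[OF fE] finite_subset by blast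
  moreover have "\<forall>X. hmult E s t f g X \<noteq> 0 \<longrightarrow> X \<in> IQ" using hmult_nz by blast
  ultimately show ?thesis unfolding HQ_def by blast
qed

lemma card_le_dsum: assumes "rrep A" "rrep B"
  shows "card (fst A i) \<le> card (fst (dsum A B) i)" "card (fst B i) \<le> card (fst (dsum A B) i)"
  using card_dsum[OF assms, of i] card_pos[OF assms(1), of i] card_pos[OF assms(2), of i] by linarith+

lemma comult_HQ2: assumes fE: "finite E" and f: "f \<in> HQ E s t"
  shows "hcomult E s t f \<in> HQ2 E s t"
proof -
  obtain n where n: "\<And>X i. X \<in> {X. f X \<noteq> 0} \<Longrightarrow> card (fst X i) \<le> n"
    using supp_bound[OF HQ_D(2)[OF f]] by blast
  let ?Bd = "{X \<in> IQ. \<forall>i. card (fst X i) \<le> n}"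
  have "{p. hcomult E s t f p \<noteq> 0} \<subseteq> ?Bd \<times> ?Bd"
  proof
    fix p assume "p \<in> {p. hcomult E s t f p \<noteq> 0}"
    then obtain A B where p: "p = (A, B)" and nz: "hcomult E s t f (A, B) \<noteq> 0" by (cases p) auto
    then have AB: "A \<in> IQ" "B \<in> IQ" and fd: "f (cn (dsum A B)) \<noteq> 0"
      unfolding hcomult_def by (auto split: if_splits)
    have rA: "rrep A" and rB: "rrep B" using AB IQ_rep by blast+
    have cd: "card (fst (dsum A B) i) \<le> n" for i
      using iso_card[OF canon_iso[OF rep_dsum[OF rA rB]], of i] n[of "cn (dsum A B)" i] fd by simp
    have "A \<in> ?Bd" "B \<in> ?Bd" using AB cd card_le_dsum[OF rA rB] le_trans by blast+
    then show "p \<in> ?Bd \<times> ?Bd" using p by simp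
  qed
  then have "finite {p. hcomult E s t f p \<noteq> 0}" using finite_bounded[OF fE] finite_subset by blast
  moreover have "\<forall>A B. hcomult E s t f (A, B) \<noteq> 0 \<longrightarrow> A \<in> IQ \<and> B \<in> IQ"
    unfolding hcomult_def by auto
  ultimately show ?thesis unfolding HQ2_def by blast
qed

lemma hunit_eq: "hunit E s t = hbasis zrep"
  unfolding hunit_def canon_zrep ..

lemma hbasis_HQ: "X \<in> IQ \<Longrightarrow> hbasis X \<in> HQ E s t"
  unfolding HQ_def hbasis_def by (auto simp: finite_subset[of _ "{X}"])

lemma hunit_HQ: "hunit E s t \<in> HQ E s t"
  unfolding hunit_eq using hbasis_HQ[OF zrep_IQ] .

lemma card1_zrep: assumes "rrep X" "\<And>i. card (fst X i) = 1" shows "X = zrep"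
proof (rule zrep_unique[OF assms(1)])
  fix i show "fst X i = {0}" using assms(2)[of i] repD(2)[OF assms(1), of i]
    by (metis card_1_singletonE singletonD)
qed

lemma fst_in_subreps: "rrep M \<Longrightarrow> fst M \<in> subreps E s t M"
  by (rule subreps_I) (auto simp: repD(2) repD(5))

lemma subrep_full: "rrep M \<Longrightarrow> subrep s M (fst M) = M"
  by (rule rep_eqI[OF rep_subrep[OF _ fst_in_subreps]]) (auto simp: subrep_def)

lemma zero_in_subreps: "rrep M \<Longrightarrow> (\<lambda>i. {0}) \<in> subreps E s t M"
  by (rule subreps_I) (auto simp: repD(2) repD(3))

lemma quot_zero: assumes M: "rrep M" shows "quot E s t M (\<lambda>i. {0}) = M"
proof (rule rep_eqI[OF rep_quot[OF M zero_in_subreps[OF M]] M])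
  show "fst (quot E s t M (\<lambda>i. {0})) = fst M" unfolding quot_def using repD(2)[OF M] by (intro ext) auto
next
  fix h x assume "h \<in> E" "x \<in> fst (quot E s t M (\<lambda>i. {0})) (s h)"
  then show "snd (quot E s t M (\<lambda>i. {0})) h x = snd M h x"
    unfolding quot_def using repD(3)[OF M] by auto
qed

lemma quot_is_zrep: assumes M: "rrep M" and L: "L \<in> subreps E s t M"
  shows "quot E s t M L = zrep \<longleftrightarrow> L = fst M"
proof
  assume "quot E s t M L = zrep"
  then have "fst (quot E s t M L) i = {0}" for i by (simp add: zrep_def)
  then have "fst M i \<subseteq> L i" for i unfolding quot_def using subreps_D(1)[OF L] by auto
  then show "L = fst M" using subreps_D(2)[OF L] by (intro ext) blast
next
  assume e: "L = fst M"
  show "quot E s t M L = zrep"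
    by (rule zrep_unique[OF rep_quot[OF M L]]) (use e repD(2)[OF M] in \<open>auto simp: quot_def\<close>)
qed

lemma subrep_is_zrep: assumes M: "rrep M" and L: "L \<in> subreps E s t M"
  shows "subrep s M L = zrep \<longleftrightarrow> L = (\<lambda>i. {0})"
proof
  assume "subrep s M L = zrep"
  then show "L = (\<lambda>i. {0})" by (simp add: zrep_def subrep_def)
next
  assume e: "L = (\<lambda>i. {0})"
  show "subrep s M L = zrep"
    by (rule zrep_unique[OF rep_subrep[OF M L]]) (simp add: e subrep_def)
qed

lemma hmult_unit_l: assumes f: "f \<in> HQ E s t" shows "hmult E s t (hunit E s t) f = f"
proof (rule ext)
  fix M show "hmult E s t (hunit E s t) f M = f M"
  proof (cases "M \<in> IQ")
    case False
    have "f M = 0" using HQ_D(1)[OF f, of M] False by blast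
    then show ?thesis unfolding hmult_def using False by simp
  next
    case True
    have rM: "rrep M" using IQ_rep[OF True] .
    have "hmult E s t (hunit E s t) f M = (\<Sum>L\<in>subreps E s t M. if L = fst M then f M else 0)"
      unfolding hmult_def hunit_eq using True
    proof (simp, intro sum.cong refl)
      fix L assume L: "L \<in> subreps E s t M"
      have "cn (quot E s t M L) = zrep \<longleftrightarrow> L = fst M"
        using canon_eq_zrep[OF rep_quot[OF rM L]] quot_is_zrep[OF rM L] by simp
      then show "hbasis zrep (cn (quot E s t M L)) * f (cn (subrep s M L)) = (if L = fst M then f M else 0)"
        using subrep_full[OF rM] canon_idem[OF True] by (auto simp: hbasis_def)
    qed
    also have "\<dots> = f M" using fst_in_subreps[OF rM] subreps_finite[OF rM] by simp
    finally show ?thesis .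
  qed
qed

lemma hmult_unit_r: assumes f: "f \<in> HQ E s t" shows "hmult E s t f (hunit E s t) = f"
proof (rule ext)
  fix M show "hmult E s t f (hunit E s t) M = f M"
  proof (cases "M \<in> IQ")
    case False
    have "f M = 0" using HQ_D(1)[OF f, of M] False by blast
    then show ?thesis unfolding hmult_def using False by simp
  next
    case True
    have rM: "rrep M" using IQ_rep[OF True] .
    have "hmult E s t f (hunit E s t) M = (\<Sum>L\<in>subreps E s t M. if L = (\<lambda>i. {0}) then f M else 0)"
      unfolding hmult_def hunit_eq using True
    proof (simp, intro sum.cong refl)
      fix L assume L: "L \<in> subreps E s t M"
      have "cn (subrep s M L) = zrep \<longleftrightarrow> L = (\<lambda>i. {0})"
        using canon_eq_zrep[OF rep_subrep[OF rM L]] subrep_is_zrep[OF rM L] by simp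
      then show "f (cn (quot E s t M L)) * hbasis zrep (cn (subrep s M L)) = (if L = (\<lambda>i. {0}) then f M else 0)"
        using quot_zero[OF rM] canon_idem[OF True] by (auto simp: hbasis_def)
    qed
    also have "\<dots> = f M" using zero_in_subreps[OF rM] subreps_finite[OF rM] by simp
    finally show ?thesis .
  qed
qed

lemma subreps_zrep: "subreps E s t zrep = {\<lambda>i. {0}}"
proof -
  have "L = (\<lambda>i. {0})" if "L \<in> subreps E s t zrep" for L
    using subreps_D(1,2)[OF that] by (intro ext) (auto simp: zrep_def)
  then show ?thesis using zero_in_subreps[OF rep_zrep] by blast
qed

lemma hcounit_mult: "hcounit E s t (hmult E s t f g) = hcounit E s t f * hcounit E s t g"
proof -
  have q: "quot E s t zrep (\<lambda>i. {0}) = zrep" using quot_zero[OF rep_zrep] .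
  have r: "subrep s zrep (\<lambda>i. {0}) = zrep" using subrep_is_zrep[OF rep_zrep zero_in_subreps[OF rep_zrep]] by simp
  show ?thesis unfolding hcounit_def canon_zrep hmult_def using zrep_IQ
    by (simp add: subreps_zrep q r canon_zrep)
qed

lemma dsum_is_zrep: assumes A: "rrep A" and B: "rrep B"
  shows "dsum A B = zrep \<longleftrightarrow> A = zrep \<and> B = zrep"
proof
  assume d: "dsum A B = zrep"
  have "card (fst A i) = 1 \<and> card (fst B i) = 1" for i
    using card_dsum[OF A B, of i] card_pos[OF A, of i] card_pos[OF B, of i] d by (simp add: zrep_def)
  then show "A = zrep \<and> B = zrep" using card1_zrep A B by blast
next
  assume "A = zrep \<and> B = zrep"
  then show "dsum A B = zrep"
    using zrep_unique[OF rep_dsum[OF A B]] by (simp add: fst_dsum zrep_def)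
qed

lemma comult_unit: "hcomult E s t (hunit E s t) (A, B) = hunit E s t A * hunit E s t B"
proof (cases "A \<in> IQ \<and> B \<in> IQ")
  case True
  then have rA: "rrep A" and rB: "rrep B" using IQ_rep by blast+
  have "cn (dsum A B) = zrep \<longleftrightarrow> A = zrep \<and> B = zrep"
    using canon_eq_zrep[OF rep_dsum[OF rA rB]] dsum_is_zrep[OF rA rB] by simp
  then show ?thesis unfolding hcomult_def hunit_eq using True by (auto simp: hbasis_def)
next
  case False
  then have "A \<noteq> zrep \<or> B \<noteq> zrep" using zrep_IQ by blast
  then show ?thesis using False unfolding hcomult_def hunit_eq hbasis_def by auto
qed

lemma coassoc: assumes A: "A \<in> IQ" and B: "B \<in> IQ" and C: "C \<in> IQ"
  shows "hcomult E s t f (cn (dsum A B), C) = hcomult E s t f (A, cn (dsum B C))"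
proof -
  have rA: "rrep A" and rB: "rrep B" and rC: "rrep C" using A B C IQ_rep by blast+
  have rAB: "rrep (dsum A B)" and rBC: "rrep (dsum B C)" using rep_dsum rA rB rC by blast+
  have "cn (dsum (cn (dsum A B)) C) = cn (dsum (dsum A B) C)"
    using canon_idem[OF C] canon_dsum_canon[OF rAB rC] by simp
  also have "\<dots> = cn (dsum A (dsum B C))"
    using canon_eq[OF iso_sym[OF dsum_assoc[OF rA rB rC]]] .
  also have "\<dots> = cn (dsum A (cn (dsum B C)))"
    using canon_idem[OF A] canon_dsum_canon[OF rA rBC] by simp
  finally show ?thesis unfolding hcomult_def using A C canon_IQ[OF rAB] canon_IQ[OF rBC] by simp
qed

lemma counit_comult: assumes f: "f \<in> HQ E s t"
  shows "hcomult E s t f (cn zrep, B) = f B" "hcomult E s t f (B, cn zrep) = f B"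
proof -
  have "hcomult E s t f (zrep, B) = f B \<and> hcomult E s t f (B, zrep) = f B"
  proof (cases "B \<in> IQ")
    case True
    have rB: "rrep B" using IQ_rep[OF True] .
    have "cn (dsum zrep B) = B" using canon_eq[OF dsum_zero_l[OF rB]] canon_idem[OF True] by simp
    moreover have "cn (dsum B zrep) = B" using canon_eq[OF dsum_zero_r[OF rB]] canon_idem[OF True] by simp
    ultimately show ?thesis unfolding hcomult_def using True zrep_IQ by simp
  next
    case False
    then have "f B = 0" using HQ_D(1)[OF f] by blast
    then show ?thesis unfolding hcomult_def using False by simp
  qed
  then show "hcomult E s t f (cn zrep, B) = f B" "hcomult E s t f (B, cn zrep) = f B"
    unfolding canon_zrep by blast+
qed

lemma cocomm: "hcomult E s t f (A, B) = hcomult E s t f (B, A)"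
proof (cases "A \<in> IQ \<and> B \<in> IQ")
  case True
  then have rA: "rrep A" and rB: "rrep B" using IQ_rep by blast+
  show ?thesis unfolding hcomult_def using True canon_eq[OF dsum_comm[OF rA rB]] by simp
next
  case False then show ?thesis unfolding hcomult_def by auto
qed

lemma Hdeg_D: "f \<in> Hdeg E s t d \<Longrightarrow> f X \<noteq> 0 \<Longrightarrow> dimv X = d" "f \<in> Hdeg E s t d \<Longrightarrow> f \<in> HQ E s t"
  unfolding Hdeg_def by blast+

lemma dimv_iso: "isoR X Y \<Longrightarrow> dimv X = dimv Y"
  unfolding dimv_def using iso_card by (intro ext) simp

lemma Hdeg_mult: assumes fE: "finite E" and f: "f \<in> Hdeg E s t d" and g: "g \<in> Hdeg E s t e"
  shows "hmult E s t f g \<in> Hdeg E s t (\<lambda>i. d i + e i)"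
proof -
  have fH: "f \<in> HQ E s t" and gH: "g \<in> HQ E s t" using f g unfolding Hdeg_def by auto
  have "dimv M = (\<lambda>i. d i + e i)" if nz: "hmult E s t f g M \<noteq> 0" for M
  proof -
    obtain L where M: "M \<in> IQ" and L: "L \<in> subreps E s t M"
      and nf: "f (cn (quot E s t M L)) \<noteq> 0" and ng: "g (cn (subrep s M L)) \<noteq> 0"
      using hmult_nz[OF nz] by blast
    have rM: "rrep M" using IQ_rep[OF M] .
    have d1: "dimv (quot E s t M L) = d"
      using Hdeg_D(1)[OF f nf] dimv_iso[OF canon_iso[OF rep_quot[OF rM L]]] by simp
    have d2: "dimv (subrep s M L) = e"
      using Hdeg_D(1)[OF g ng] dimv_iso[OF canon_iso[OF rep_subrep[OF rM L]]] by simp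
    show ?thesis
    proof (rule ext)
      fix i
      have "card (fst (quot E s t M L) i) - 1 = d i" using d1 unfolding dimv_def by meson
      moreover have "card (L i) - 1 = e i" using d2 card_subrep unfolding dimv_def by metis
      moreover have "card (fst (quot E s t M L) i) \<ge> 1" using card_pos[OF rep_quot[OF rM L]] .
      moreover have "card (L i) \<ge> 1" using card_pos[OF rep_subrep[OF rM L], of i] card_subrep by simp
      ultimately show "dimv M i = d i + e i" using card_quot[OF rM L, of i] unfolding dimv_def by linarith
    qed
  qed
  then show ?thesis unfolding Hdeg_def using hmult_HQ[OF fE fH gH] by blast
qed

lemma Hdeg_comult: assumes f: "f \<in> Hdeg E s t d" and nz: "hcomult E s t f (A, B) \<noteq> 0"
  shows "(\<lambda>i. dimv A i + dimv B i) = d"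
proof -
  have AB: "A \<in> IQ" "B \<in> IQ" and fd: "f (cn (dsum A B)) \<noteq> 0"
    using nz unfolding hcomult_def by (auto split: if_splits)
  have rA: "rrep A" and rB: "rrep B" using AB IQ_rep by blast+
  have "dimv (dsum A B) = d" using Hdeg_D(1)[OF f fd] dimv_iso[OF canon_iso[OF rep_dsum[OF rA rB]]] by simp
  show ?thesis
  proof (rule ext)
    fix i
    have "card (fst (dsum A B) i) - 1 = d i" using \<open>dimv (dsum A B) = d\<close> unfolding dimv_def by meson
    then show "dimv A i + dimv B i = d i"
      using card_dsum[OF rA rB, of i] card_pos[OF rA, of i] card_pos[OF rB, of i] unfolding dimv_def by linarith
  qed
qed

lemma hunit_deg0: "hunit E s t \<in> Hdeg E s t (\<lambda>i. 0)"
  unfolding Hdeg_def using hunit_HQ by (auto simp: hunit_eq hbasis_def dimv_def zrep_def)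

lemma connected: assumes f: "f \<in> Hdeg E s t (\<lambda>i. 0)" shows "\<exists>c. f = hsmult c (hunit E s t)"
proof -
  have z: "X = zrep" if "f X \<noteq> 0" for X
  proof -
    have X: "X \<in> IQ" and d: "dimv X = (\<lambda>i. 0)" using Hdeg_D[OF f] HQ_D(1) that by blast+
    have "card (fst X i) = 1" for i using d card_pos[OF IQ_rep[OF X], of i] unfolding dimv_def
      by (metis diff_is_0_eq le_antisym)
    then show ?thesis using card1_zrep IQ_rep[OF X] by blast
  qed
  have "f = hsmult (f zrep) (hunit E s t)"
  proof (rule ext)
    fix X show "f X = hsmult (f zrep) (hunit E s t) X"
      unfolding hsmult_def hunit_eq hbasis_def using z[of X] by auto
  qed
  then show ?thesis by blast
qed

lemma bialgebra: assumes fE: "finite E" shows "graded_connected_cocomm_bialgebra E s t"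
  unfolding graded_connected_cocomm_bialgebra_def
  using hunit_HQ hmult_HQ[OF fE] hmult_assoc hmult_unit_l hmult_unit_r comult_HQ2[OF fE]
    coassoc counit_comult cocomm comult_mult comult_unit hcounit_mult Hdeg_mult[OF fE] Hdeg_comult
    hunit_deg0 connected
  by (simp add: hcounit_def hunit_eq canon_zrep hbasis_def)

lemma HQ_I: "(\<And>X. f X \<noteq> 0 \<Longrightarrow> X \<in> IQ) \<Longrightarrow> finite {X. f X \<noteq> 0} \<Longrightarrow> f \<in> HQ E s t"
  unfolding HQ_def by blast

lemma HQ_zero: "(\<lambda>Y. 0) \<in> HQ E s t"
  by (rule HQ_I) auto

lemma HQ_add: assumes "f \<in> HQ E s t" "g \<in> HQ E s t" shows "(\<lambda>Y. f Y + g Y) \<in> HQ E s t"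
proof (rule HQ_I)
  fix X assume "f X + g X \<noteq> 0" then have "f X \<noteq> 0 \<or> g X \<noteq> 0" by auto
  then show "X \<in> IQ" using HQ_D(1)[OF assms(1)] HQ_D(1)[OF assms(2)] by blast
next
  have "{X. f X + g X \<noteq> 0} \<subseteq> {X. f X \<noteq> 0} \<union> {X. g X \<noteq> 0}" by auto
  then show "finite {X. f X + g X \<noteq> 0}" using HQ_D(2) assms finite_subset by blast
qed

lemma HQ_diff: assumes "f \<in> HQ E s t" "g \<in> HQ E s t" shows "(\<lambda>Y. f Y - g Y) \<in> HQ E s t"
proof (rule HQ_I)
  fix X assume "f X - g X \<noteq> 0" then have "f X \<noteq> 0 \<or> g X \<noteq> 0" by auto
  then show "X \<in> IQ" using HQ_D(1)[OF assms(1)] HQ_D(1)[OF assms(2)] by blast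
next
  have "{X. f X - g X \<noteq> 0} \<subseteq> {X. f X \<noteq> 0} \<union> {X. g X \<noteq> 0}" by auto
  then show "finite {X. f X - g X \<noteq> 0}" using HQ_D(2) assms finite_subset by blast
qed

lemma HQ_smult: assumes "f \<in> HQ E s t" shows "(\<lambda>Y. c * f Y) \<in> HQ E s t"
proof (rule HQ_I)
  fix X assume "c * f X \<noteq> 0" then show "X \<in> IQ" using HQ_D(1) assms by fastforce
next
  have "{X. c * f X \<noteq> 0} \<subseteq> {X. f X \<noteq> 0}" by auto
  then show "finite {X. c * f X \<noteq> 0}" using HQ_D(2) assms finite_subset by blast
qed

lemma HQ_sum: assumes "finite J" "\<And>j. j \<in> J \<Longrightarrow> F j \<in> HQ E s t" shows "(\<lambda>Y. \<Sum>j\<in>J. F j Y) \<in> HQ E s t"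
  using assms
proof (induction J rule: finite_induct)
  case empty then show ?case using HQ_zero by simp
next
  case (insert j J)
  then show ?case using HQ_add[of "F j" "\<lambda>Y. \<Sum>j\<in>J. F j Y"] by simp
qed

lemma hmult_sum_l: "hmult E s t (\<lambda>Y. \<Sum>j\<in>J. F j Y) g = (\<lambda>M. \<Sum>j\<in>J. hmult E s t (F j) g M)"
  unfolding hmult_def by (auto intro!: ext simp: sum_distrib_right intro: sum.swap)

lemma hmult_sum_r: "hmult E s t g (\<lambda>Y. \<Sum>j\<in>J. F j Y) = (\<lambda>M. \<Sum>j\<in>J. hmult E s t g (F j) M)"
  unfolding hmult_def by (auto intro!: ext simp: sum_distrib_left intro: sum.swap)

lemma hmult_zero_r: "hmult E s t g (\<lambda>Y. 0) = (\<lambda>Y. 0)"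
  unfolding hmult_def by auto

lemma hmult_zero_l: "hmult E s t (\<lambda>Y. 0) g = (\<lambda>Y. 0)"
  unfolding hmult_def by auto

definition pairs :: "('v,'e) rep \<Rightarrow> (('v,'e) rep \<times> ('v,'e) rep) set" where
  "pairs X = {p. fst p \<in> IQ \<and> snd p \<in> IQ \<and> cn (dsum (fst p) (snd p)) = X}"

definition eu :: "('v,'e) rep \<Rightarrow> ('v,'e) rep \<Rightarrow> complex" where
  "eu X = (if X = zrep then hbasis zrep else (\<lambda>Y. 0))"

definition sz :: "('v,'e) rep \<Rightarrow> nat" where
  "sz X = (\<Sum>i\<in>UNIV. card (fst X i))"

lemma pairs_sz: assumes p: "p \<in> pairs X"
  shows "snd p \<noteq> zrep \<Longrightarrow> sz (fst p) < sz X" and "fst p \<noteq> zrep \<Longrightarrow> sz (snd p) < sz X"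
proof -
  obtain A B where pAB: "p = (A, B)" by (cases p)
  have A: "A \<in> IQ" and B: "B \<in> IQ" and X: "cn (dsum A B) = X" using p pAB unfolding pairs_def by auto
  have rA: "rrep A" and rB: "rrep B" using A B IQ_rep by blast+
  have cX: "card (fst X i) + 1 = card (fst A i) + card (fst B i)" for i
    using card_dsum[OF rA rB, of i] iso_card[OF canon_iso[OF rep_dsum[OF rA rB]], of i] X by simp
  have pA: "card (fst A i) \<ge> 1" and pB: "card (fst B i) \<ge> 1" for i using card_pos rA rB by blast+
  show "snd p \<noteq> zrep \<Longrightarrow> sz (fst p) < sz X"
  proof -
    assume "snd p \<noteq> zrep"
    then have "B \<noteq> zrep" using pAB by simp
    then obtain j where j: "card (fst B j) \<noteq> 1" using card1_zrep[OF rB] by blast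
    have "(\<Sum>i\<in>UNIV. card (fst A i)) < (\<Sum>i\<in>UNIV. card (fst X i))"
    proof (rule sum_strict_mono_ex1)
      show "\<forall>i\<in>UNIV. card (fst A i) \<le> card (fst X i)" proof
      fix i show "card (fst A i) \<le> card (fst X i)" using cX[of i] pB[of i] by linarith
    qed
      have "card (fst A j) < card (fst X j)" using cX[of j] pB[of j] j by linarith
      then show "\<exists>i\<in>UNIV. card (fst A i) < card (fst X i)" by blast
    qed simp
    then show ?thesis using pAB unfolding sz_def by simp
  qed
  show "fst p \<noteq> zrep \<Longrightarrow> sz (snd p) < sz X"
  proof -
    assume "fst p \<noteq> zrep"
    then have "A \<noteq> zrep" using pAB by simp
    then obtain j where j: "card (fst A j) \<noteq> 1" using card1_zrep[OF rA] by blast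
    have "(\<Sum>i\<in>UNIV. card (fst B i)) < (\<Sum>i\<in>UNIV. card (fst X i))"
    proof (rule sum_strict_mono_ex1)
      show "\<forall>i\<in>UNIV. card (fst B i) \<le> card (fst X i)" proof
      fix i show "card (fst B i) \<le> card (fst X i)" using cX[of i] pA[of i] by linarith
    qed
      have "card (fst B j) < card (fst X j)" using cX[of j] pA[of j] j by linarith
      then show "\<exists>i\<in>UNIV. card (fst B i) < card (fst X i)" by blast
    qed simp
    then show ?thesis using pAB unfolding sz_def by simp
  qed
qed

function SL :: "('v,'e) rep \<Rightarrow> ('v,'e) rep \<Rightarrow> complex" where
  "SL X = (if X \<in> IQ then (\<lambda>Y. eu X Y - (\<Sum>p\<in>{p \<in> pairs X. snd p \<noteq> zrep}.
      hmult E s t (SL (fst p)) (hbasis (snd p)) Y)) else (\<lambda>Y. 0))"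
  by auto
termination
  by (relation "measure sz") (auto intro: pairs_sz)

function SR :: "('v,'e) rep \<Rightarrow> ('v,'e) rep \<Rightarrow> complex" where
  "SR X = (if X \<in> IQ then (\<lambda>Y. eu X Y - (\<Sum>p\<in>{p \<in> pairs X. fst p \<noteq> zrep}.
      hmult E s t (hbasis (fst p)) (SR (snd p)) Y)) else (\<lambda>Y. 0))"
  by auto
termination
  by (relation "measure sz") (auto intro: pairs_sz)

declare SL.simps[simp del] SR.simps[simp del]

lemma pairs_finite: assumes fE: "finite E" shows "finite (pairs X)"
proof (cases "X \<in> IQ")
  case False
  then have "pairs X = {}" unfolding pairs_def using canon_IQ rep_dsum IQ_rep by blast
  then show ?thesis by simp
next
  case True
  obtain n where n: "\<And>i. card (fst X i) \<le> n" using supp_bound[of "{X}"] by auto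
  let ?Bd = "{X \<in> IQ. \<forall>i. card (fst X i) \<le> n}"
  have "pairs X \<subseteq> ?Bd \<times> ?Bd"
  proof
    fix p assume p: "p \<in> pairs X"
    obtain A B where pAB: "p = (A, B)" by (cases p)
    have A: "A \<in> IQ" and B: "B \<in> IQ" and X: "cn (dsum A B) = X" using p pAB unfolding pairs_def by auto
    have rA: "rrep A" and rB: "rrep B" using A B IQ_rep by blast+
    have cd: "card (fst (dsum A B) i) \<le> n" for i
      using iso_card[OF canon_iso[OF rep_dsum[OF rA rB]], of i] X n[of i] by simp
    have "A \<in> ?Bd" "B \<in> ?Bd" using A B cd card_le_dsum[OF rA rB] le_trans by blast+
    then show "p \<in> ?Bd \<times> ?Bd" using pAB by simp
  qed
  then show ?thesis using finite_bounded[OF fE] finite_subset by blast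
qed

lemma pairs_empty: "X \<notin> IQ \<Longrightarrow> pairs X = {}"
  unfolding pairs_def using canon_IQ rep_dsum IQ_rep by blast

lemma pairs_mem: "p \<in> pairs X \<Longrightarrow> fst p \<in> IQ" "p \<in> pairs X \<Longrightarrow> snd p \<in> IQ"
  "p \<in> pairs X \<Longrightarrow> cn (dsum (fst p) (snd p)) = X"
  unfolding pairs_def by auto

lemma pairs_zr: assumes X: "X \<in> IQ" shows "(X, zrep) \<in> pairs X"
  "p \<in> pairs X \<Longrightarrow> snd p = zrep \<Longrightarrow> p = (X, zrep)"
proof -
  have rX: "rrep X" using IQ_rep[OF X] .
  show "(X, zrep) \<in> pairs X" unfolding pairs_def
    using X zrep_IQ canon_eq[OF dsum_zero_r[OF rX]] canon_idem[OF X] by simp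
  assume p: "p \<in> pairs X" and z: "snd p = zrep"
  have A: "fst p \<in> IQ" using pairs_mem(1)[OF p] .
  have "cn (dsum (fst p) zrep) = X" using pairs_mem(3)[OF p] z by simp
  then have "fst p = X" using canon_eq[OF dsum_zero_r[OF IQ_rep[OF A]]] canon_idem[OF A] by simp
  then show "p = (X, zrep)" using z by (simp add: prod_eq_iff)
qed

lemma pairs_zl: assumes X: "X \<in> IQ" shows "(zrep, X) \<in> pairs X"
  "p \<in> pairs X \<Longrightarrow> fst p = zrep \<Longrightarrow> p = (zrep, X)"
proof -
  have rX: "rrep X" using IQ_rep[OF X] .
  show "(zrep, X) \<in> pairs X" unfolding pairs_def
    using X zrep_IQ canon_eq[OF dsum_zero_l[OF rX]] canon_idem[OF X] by simp
  assume p: "p \<in> pairs X" and z: "fst p = zrep"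
  have B: "snd p \<in> IQ" using pairs_mem(2)[OF p] .
  have "cn (dsum zrep (snd p)) = X" using pairs_mem(3)[OF p] z by simp
  then have "snd p = X" using canon_eq[OF dsum_zero_l[OF IQ_rep[OF B]]] canon_idem[OF B] by simp
  then show "p = (zrep, X)" using z by (simp add: prod_eq_iff)
qed

lemma eu_HQ: "eu X \<in> HQ E s t"
  unfolding eu_def using hbasis_HQ[OF zrep_IQ] HQ_zero by simp

lemma SL_out: "X \<notin> IQ \<Longrightarrow> SL X = (\<lambda>Y. 0)"
  by (subst SL.simps) simp

lemma SR_out: "X \<notin> IQ \<Longrightarrow> SR X = (\<lambda>Y. 0)"
  by (subst SR.simps) simp

lemma SL_HQ: assumes fE: "finite E" shows "SL X \<in> HQ E s t"
proof (induction X rule: SL.induct)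
  case (1 X)
  show ?case
  proof (cases "X \<in> IQ")
    case False then show ?thesis using SL_out HQ_zero by simp
  next
    case True
    have "(\<lambda>Y. \<Sum>p\<in>{p \<in> pairs X. snd p \<noteq> zrep}. hmult E s t (SL (fst p)) (hbasis (snd p)) Y) \<in> HQ E s t"
    proof (rule HQ_sum)
      show "finite {p \<in> pairs X. snd p \<noteq> zrep}" using pairs_finite[OF fE] by simp
      fix p assume p: "p \<in> {p \<in> pairs X. snd p \<noteq> zrep}"
      show "hmult E s t (SL (fst p)) (hbasis (snd p)) \<in> HQ E s t"
        using hmult_HQ[OF fE 1[OF True p] hbasis_HQ[OF pairs_mem(2)]] p by blast
    qed
    then have "(\<lambda>Y. eu X Y - (\<Sum>p\<in>{p \<in> pairs X. snd p \<noteq> zrep}. hmult E s t (SL (fst p)) (hbasis (snd p)) Y)) \<in> HQ E s t"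
      using HQ_diff eu_HQ by blast
    then show ?thesis using True by (subst SL.simps) simp
  qed
qed

lemma SR_HQ: assumes fE: "finite E" shows "SR X \<in> HQ E s t"
proof (induction X rule: SR.induct)
  case (1 X)
  show ?case
  proof (cases "X \<in> IQ")
    case False then show ?thesis using SR_out HQ_zero by simp
  next
    case True
    have "(\<lambda>Y. \<Sum>p\<in>{p \<in> pairs X. fst p \<noteq> zrep}. hmult E s t (hbasis (fst p)) (SR (snd p)) Y) \<in> HQ E s t"
    proof (rule HQ_sum)
      show "finite {p \<in> pairs X. fst p \<noteq> zrep}" using pairs_finite[OF fE] by simp
      fix p assume p: "p \<in> {p \<in> pairs X. fst p \<noteq> zrep}"
      show "hmult E s t (hbasis (fst p)) (SR (snd p)) \<in> HQ E s t"
        using hmult_HQ[OF fE hbasis_HQ[OF pairs_mem(1)] 1[OF True p]] p by blast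
    qed
    then have "(\<lambda>Y. eu X Y - (\<Sum>p\<in>{p \<in> pairs X. fst p \<noteq> zrep}. hmult E s t (hbasis (fst p)) (SR (snd p)) Y)) \<in> HQ E s t"
      using HQ_diff eu_HQ by blast
    then show ?thesis using True by (subst SR.simps) simp
  qed
qed

definition conv :: "(('v,'e) rep \<Rightarrow> ('v,'e) rep \<Rightarrow> complex) \<Rightarrow> (('v,'e) rep \<Rightarrow> ('v,'e) rep \<Rightarrow> complex)
    \<Rightarrow> ('v,'e) rep \<Rightarrow> ('v,'e) rep \<Rightarrow> complex" where
  "conv P R X = (\<lambda>Y. \<Sum>p\<in>pairs X. hmult E s t (P (fst p)) (R (snd p)) Y)"

lemma conv_SL: assumes fE: "finite E" shows "conv SL hbasis X = eu X"
proof (cases "X \<in> IQ")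
  case False
  then have "X \<noteq> zrep" using zrep_IQ by blast
  then show ?thesis unfolding conv_def eu_def using pairs_empty[OF False] by simp
next
  case True
  let ?R = "{p \<in> pairs X. snd p \<noteq> zrep}"
  have pe: "pairs X = insert (X, zrep) ?R"
  proof
    show "pairs X \<subseteq> insert (X, zrep) ?R" using pairs_zr(2)[OF True] by blast
    show "insert (X, zrep) ?R \<subseteq> pairs X" using pairs_zr(1)[OF True] by blast
  qed
  have fR: "finite ?R" using pairs_finite[OF fE] by simp
  have ni: "(X, zrep) \<notin> ?R" by simp
  have "conv SL hbasis X = (\<lambda>Y. hmult E s t (SL X) (hbasis zrep) Y +
      (\<Sum>p\<in>?R. hmult E s t (SL (fst p)) (hbasis (snd p)) Y))"
    unfolding conv_def by (subst pe) (simp only: sum.insert[OF fR ni] fst_conv snd_conv)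
  also have "\<dots> = (\<lambda>Y. SL X Y + (\<Sum>p\<in>?R. hmult E s t (SL (fst p)) (hbasis (snd p)) Y))"
    using hmult_unit_r[OF SL_HQ[OF fE], of X] unfolding hunit_eq by (simp only:)
  also have "\<dots> = eu X"
  proof -
    have eqX: "SL X = (\<lambda>Y. eu X Y - (\<Sum>p\<in>?R. hmult E s t (SL (fst p)) (hbasis (snd p)) Y))"
      using True by (subst SL.simps) simp
    show ?thesis by (rule ext) (simp add: eqX)
  qed
  finally show ?thesis .
qed

lemma conv_SR: assumes fE: "finite E" shows "conv hbasis SR X = eu X"
proof (cases "X \<in> IQ")
  case False
  then have "X \<noteq> zrep" using zrep_IQ by blast
  then show ?thesis unfolding conv_def eu_def using pairs_empty[OF False] by simp
next
  case True
  let ?R = "{p \<in> pairs X. fst p \<noteq> zrep}"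
  have pe: "pairs X = insert (zrep, X) ?R"
  proof
    show "pairs X \<subseteq> insert (zrep, X) ?R" using pairs_zl(2)[OF True] by blast
    show "insert (zrep, X) ?R \<subseteq> pairs X" using pairs_zl(1)[OF True] by blast
  qed
  have fR: "finite ?R" using pairs_finite[OF fE] by simp
  have ni: "(zrep, X) \<notin> ?R" by simp
  have "conv hbasis SR X = (\<lambda>Y. hmult E s t (hbasis zrep) (SR X) Y +
      (\<Sum>p\<in>?R. hmult E s t (hbasis (fst p)) (SR (snd p)) Y))"
    unfolding conv_def by (subst pe) (simp only: sum.insert[OF fR ni] fst_conv snd_conv)
  also have "\<dots> = (\<lambda>Y. SR X Y + (\<Sum>p\<in>?R. hmult E s t (hbasis (fst p)) (SR (snd p)) Y))"
    using hmult_unit_l[OF SR_HQ[OF fE], of X] unfolding hunit_eq by (simp only:)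
  also have "\<dots> = eu X"
  proof -
    have eqX: "SR X = (\<lambda>Y. eu X Y - (\<Sum>p\<in>?R. hmult E s t (hbasis (fst p)) (SR (snd p)) Y))"
      using True by (subst SR.simps) simp
    show ?thesis by (rule ext) (simp add: eqX)
  qed
  finally show ?thesis .
qed

lemma canon_assoc: assumes A: "A \<in> IQ" and B: "B \<in> IQ" and C: "C \<in> IQ"
  shows "cn (dsum (cn (dsum A B)) C) = cn (dsum A (cn (dsum B C)))"
proof -
  have rA: "rrep A" and rB: "rrep B" and rC: "rrep C" using A B C IQ_rep by blast+
  have rAB: "rrep (dsum A B)" and rBC: "rrep (dsum B C)" using rep_dsum rA rB rC by blast+
  have "cn (dsum (cn (dsum A B)) C) = cn (dsum (dsum A B) C)"
    using canon_idem[OF C] canon_dsum_canon[OF rAB rC] by simp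
  also have "\<dots> = cn (dsum A (dsum B C))"
    using canon_eq[OF iso_sym[OF dsum_assoc[OF rA rB rC]]] .
  also have "\<dots> = cn (dsum A (cn (dsum B C)))"
    using canon_idem[OF A] canon_dsum_canon[OF rA rBC] by simp
  finally show ?thesis .
qed

definition trip :: "('v,'e) rep \<Rightarrow> (('v,'e) rep \<times> ('v,'e) rep \<times> ('v,'e) rep) set" where
  "trip X = {(a, b, c). a \<in> IQ \<and> b \<in> IQ \<and> c \<in> IQ \<and> cn (dsum (cn (dsum a b)) c) = X}"

lemma conv_assoc: assumes fE: "finite E"
  shows "conv (conv P Q) R X = conv P (conv Q R) X"
proof (rule ext)
  fix Y
  define F where "F = (\<lambda>(a, b, c). hmult E s t (hmult E s t (P a) (Q b)) (R c) Y)"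
  have fp: "finite (pairs Z)" for Z using pairs_finite[OF fE] .
  have "conv (conv P Q) R X Y = (\<Sum>q\<in>pairs X. \<Sum>p\<in>pairs (fst q). hmult E s t (hmult E s t (P (fst p)) (Q (snd p))) (R (snd q)) Y)"
    unfolding conv_def hmult_sum_l ..
  also have "\<dots> = (\<Sum>(q, p)\<in>Sigma (pairs X) (\<lambda>q. pairs (fst q)). hmult E s t (hmult E s t (P (fst p)) (Q (snd p))) (R (snd q)) Y)"
    by (rule sum.Sigma) (use fp in auto)
  also have "\<dots> = (\<Sum>w\<in>trip X. F w)"
  proof (rule sum.reindex_bij_witness[where j = "\<lambda>(q, p). (fst p, snd p, snd q)"
        and i = "\<lambda>(a, b, c). ((cn (dsum a b), c), (a, b))"])
    fix qp assume qp: "qp \<in> Sigma (pairs X) (\<lambda>q. pairs (fst q))"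
    obtain q p where e: "qp = (q, p)" by (cases qp)
    have q: "q \<in> pairs X" and p: "p \<in> pairs (fst q)" using qp e by auto
    show "(\<lambda>(a, b, c). ((cn (dsum a b), c), (a, b))) ((\<lambda>(q, p). (fst p, snd p, snd q)) qp) = qp"
      using pairs_mem(3)[OF p] unfolding e by simp
    show "(\<lambda>(q, p). (fst p, snd p, snd q)) qp \<in> trip X"
      using e pairs_mem[OF p] pairs_mem[OF q] unfolding trip_def by auto
    show "F ((\<lambda>(q, p). (fst p, snd p, snd q)) qp) =
      (case qp of (q, p) \<Rightarrow> hmult E s t (hmult E s t (P (fst p)) (Q (snd p))) (R (snd q)) Y)"
      using e unfolding F_def by simp
  next
    fix w assume w: "w \<in> trip X"
    obtain a b c where e: "w = (a, b, c)" by (cases w)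
    have a: "a \<in> IQ" and b: "b \<in> IQ" and c: "c \<in> IQ" and X: "cn (dsum (cn (dsum a b)) c) = X"
      using w e unfolding trip_def by auto
    show "(\<lambda>(q, p). (fst p, snd p, snd q)) ((\<lambda>(a, b, c). ((cn (dsum a b), c), (a, b))) w) = w"
      using e by simp
    have "cn (dsum a b) \<in> IQ" using canon_IQ[OF rep_dsum[OF IQ_rep[OF a] IQ_rep[OF b]]] .
    then show "(\<lambda>(a, b, c). ((cn (dsum a b), c), (a, b))) w \<in> Sigma (pairs X) (\<lambda>q. pairs (fst q))"
      using e a b c X unfolding pairs_def by simp
  qed
  also have "\<dots> = (\<Sum>(q, p)\<in>Sigma (pairs X) (\<lambda>q. pairs (snd q)). hmult E s t (P (fst q)) (hmult E s t (Q (fst p)) (R (snd p))) Y)"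
  proof (rule sum.reindex_bij_witness[where j = "\<lambda>(a, b, c). ((a, cn (dsum b c)), (b, c))"
        and i = "\<lambda>(q, p). (fst q, fst p, snd p)"])
    fix w assume w: "w \<in> trip X"
    obtain a b c where e: "w = (a, b, c)" by (cases w)
    have a: "a \<in> IQ" and b: "b \<in> IQ" and c: "c \<in> IQ" and X: "cn (dsum (cn (dsum a b)) c) = X"
      using w e unfolding trip_def by auto
    show "(\<lambda>(q, p). (fst q, fst p, snd p)) ((\<lambda>(a, b, c). ((a, cn (dsum b c)), (b, c))) w) = w"
      using e by simp
    have "cn (dsum b c) \<in> IQ" using canon_IQ[OF rep_dsum[OF IQ_rep[OF b] IQ_rep[OF c]]] .
    then show "(\<lambda>(a, b, c). ((a, cn (dsum b c)), (b, c))) w \<in> Sigma (pairs X) (\<lambda>q. pairs (snd q))"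
      using e a b c X canon_assoc[OF a b c] unfolding pairs_def by simp
    show "(case (\<lambda>(a, b, c). ((a, cn (dsum b c)), (b, c))) w of (q, p) \<Rightarrow>
        hmult E s t (P (fst q)) (hmult E s t (Q (fst p)) (R (snd p))) Y) = F w"
      using e unfolding F_def by (simp add: hmult_assoc)
  next
    fix qp assume qp: "qp \<in> Sigma (pairs X) (\<lambda>q. pairs (snd q))"
    obtain q p where e: "qp = (q, p)" by (cases qp)
    have q: "q \<in> pairs X" and p: "p \<in> pairs (snd q)" using qp e by auto
    show "(\<lambda>(a, b, c). ((a, cn (dsum b c)), (b, c))) ((\<lambda>(q, p). (fst q, fst p, snd p)) qp) = qp"
      using pairs_mem(3)[OF p] unfolding e by (cases p) simp
    show "(\<lambda>(q, p). (fst q, fst p, snd p)) qp \<in> trip X"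
      using e pairs_mem[OF p] pairs_mem[OF q] canon_assoc[of "fst q" "fst p" "snd p"] unfolding trip_def by auto
  qed
  also have "\<dots> = (\<Sum>q\<in>pairs X. \<Sum>p\<in>pairs (snd q). hmult E s t (P (fst q)) (hmult E s t (Q (fst p)) (R (snd p))) Y)"
    by (rule sum.Sigma[symmetric]) (use fp in auto)
  also have "\<dots> = conv P (conv Q R) X Y"
    unfolding conv_def hmult_sum_r ..
  finally show "conv (conv P Q) R X Y = conv P (conv Q R) X Y" .
qed

lemma conv_unit_r: assumes fE: "finite E" and P: "P X \<in> HQ E s t" and P0: "X \<notin> IQ \<Longrightarrow> P X = (\<lambda>Y. 0)"
  shows "conv P eu X = P X"
proof (cases "X \<in> IQ")
  case False then show ?thesis unfolding conv_def using pairs_empty P0 by simp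
next
  case True
  show ?thesis
  proof (rule ext)
    fix Y
    have "conv P eu X Y = (\<Sum>p\<in>pairs X. if p = (X, zrep) then P X Y else 0)"
      unfolding conv_def
    proof (rule sum.cong[OF refl])
      fix p assume p: "p \<in> pairs X"
      show "hmult E s t (P (fst p)) (eu (snd p)) Y = (if p = (X, zrep) then P X Y else 0)"
      proof (cases "snd p = zrep")
        case True
        then have "p = (X, zrep)" using pairs_zr(2)[OF \<open>X \<in> IQ\<close> p] by simp
        then show ?thesis using hmult_unit_r[OF P] unfolding hunit_eq eu_def by simp
      next
        case False
        then have "p \<noteq> (X, zrep)" by auto
        then show ?thesis using False hmult_zero_r unfolding eu_def by simp
      qed
    qed
    also have "\<dots> = P X Y" using pairs_zr(1)[OF True] pairs_finite[OF fE] by simp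
    finally show "conv P eu X Y = P X Y" .
  qed
qed

lemma conv_unit_l: assumes fE: "finite E" and P: "P X \<in> HQ E s t" and P0: "X \<notin> IQ \<Longrightarrow> P X = (\<lambda>Y. 0)"
  shows "conv eu P X = P X"
proof (cases "X \<in> IQ")
  case False then show ?thesis unfolding conv_def using pairs_empty P0 by simp
next
  case True
  show ?thesis
  proof (rule ext)
    fix Y
    have "conv eu P X Y = (\<Sum>p\<in>pairs X. if p = (zrep, X) then P X Y else 0)"
      unfolding conv_def
    proof (rule sum.cong[OF refl])
      fix p assume p: "p \<in> pairs X"
      show "hmult E s t (eu (fst p)) (P (snd p)) Y = (if p = (zrep, X) then P X Y else 0)"
      proof (cases "fst p = zrep")
        case True
        then have "p = (zrep, X)" using pairs_zl(2)[OF \<open>X \<in> IQ\<close> p] by simp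
        then show ?thesis using hmult_unit_l[OF P] unfolding hunit_eq eu_def by simp
      next
        case False
        then have "p \<noteq> (zrep, X)" by auto
        then show ?thesis using False hmult_zero_l unfolding eu_def by simp
      qed
    qed
    also have "\<dots> = P X Y" using pairs_zl(1)[OF True] pairs_finite[OF fE] by simp
    finally show "conv eu P X Y = P X Y" .
  qed
qed

lemma SL_SR: assumes fE: "finite E" shows "SL X = SR X"
proof -
  have c1: "conv hbasis SR = eu" using conv_SR[OF fE] by (intro ext) simp
  have c2: "conv SL hbasis = eu" using conv_SL[OF fE] by (intro ext) simp
  have "SL X = conv SL eu X" using conv_unit_r[OF fE SL_HQ[OF fE] SL_out] by simp
  also have "\<dots> = conv SL (conv hbasis SR) X" unfolding c1 ..
  also have "\<dots> = conv (conv SL hbasis) SR X" using conv_assoc[OF fE] by simp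
  also have "\<dots> = conv eu SR X" unfolding c2 ..
  also have "\<dots> = SR X" using conv_unit_l[OF fE SR_HQ[OF fE] SR_out] by simp
  finally show ?thesis .
qed

definition Sf :: "(('v,'e) rep \<Rightarrow> complex) \<Rightarrow> ('v,'e) rep \<Rightarrow> complex" where
  "Sf f = (\<lambda>Y. \<Sum>X\<in>{X. f X \<noteq> 0}. f X * SL X Y)"

lemma Sf_eq: assumes "finite U" "{X. f X \<noteq> 0} \<subseteq> U" shows "Sf f Y = (\<Sum>X\<in>U. f X * SL X Y)"
  unfolding Sf_def by (rule sum.mono_neutral_left[OF assms]) auto

lemma Sf_HQ: assumes fE: "finite E" and f: "f \<in> HQ E s t" shows "Sf f \<in> HQ E s t"
  unfolding Sf_def by (rule HQ_sum[OF HQ_D(2)[OF f]]) (rule HQ_smult[OF SL_HQ[OF fE]])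

lemma Sf_add: assumes f: "f \<in> HQ E s t" and g: "g \<in> HQ E s t"
  shows "Sf (\<lambda>X. f X + g X) = (\<lambda>X. Sf f X + Sf g X)"
proof (rule ext)
  fix Y
  let ?U = "{X. f X \<noteq> 0} \<union> {X. g X \<noteq> 0}"
  have fU: "finite ?U" using HQ_D(2) f g by blast
  have "Sf (\<lambda>X. f X + g X) Y = (\<Sum>X\<in>?U. (f X + g X) * SL X Y)" by (rule Sf_eq[OF fU]) auto
  also have "\<dots> = (\<Sum>X\<in>?U. f X * SL X Y) + (\<Sum>X\<in>?U. g X * SL X Y)"
    by (simp add: distrib_right sum.distrib)
  also have "\<dots> = Sf f Y + Sf g Y" using Sf_eq[OF fU, of f Y] Sf_eq[OF fU, of g Y] by auto
  finally show "Sf (\<lambda>X. f X + g X) Y = Sf f Y + Sf g Y" .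
qed

lemma Sf_smult: assumes f: "f \<in> HQ E s t" shows "Sf (hsmult c f) = hsmult c (Sf f)"
proof (rule ext)
  fix Y
  let ?U = "{X. f X \<noteq> 0}"
  have fU: "finite ?U" using HQ_D(2) f by blast
  have "Sf (hsmult c f) Y = (\<Sum>X\<in>?U. (c * f X) * SL X Y)" unfolding hsmult_def by (rule Sf_eq[OF fU]) auto
  also have "\<dots> = c * (\<Sum>X\<in>?U. f X * SL X Y)" by (simp add: sum_distrib_left mult.assoc)
  also have "\<dots> = hsmult c (Sf f) Y" unfolding hsmult_def Sf_def ..
  finally show "Sf (hsmult c f) Y = hsmult c (Sf f) Y" .
qed

lemma Sf_basis: "Sf (hbasis A) = SL A"
proof (rule ext)
  fix Y
  have "{X. hbasis A X \<noteq> 0} = {A}" unfolding hbasis_def by auto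
  then show "Sf (hbasis A) Y = SL A Y" unfolding Sf_def by (simp add: hbasis_def)
qed

lemma sum_comult: assumes fE: "finite E" and f: "f \<in> HQ E s t"
  shows "(\<Sum>p\<in>{p. hcomult E s t f p \<noteq> 0}. hcomult E s t f p * G p)
       = (\<Sum>Z\<in>{Z. f Z \<noteq> 0}. f Z * (\<Sum>p\<in>pairs Z. G p))"
proof -
  let ?S = "{p. hcomult E s t f p \<noteq> 0}" and ?T = "{Z. f Z \<noteq> 0}"
  let ?g = "\<lambda>p. cn (dsum (fst p) (snd p))"
  have fS: "finite ?S" using comult_HQ2[OF fE f] unfolding HQ2_def by blast
  have fT: "finite ?T" using HQ_D(2)[OF f] .
  have memS: "p \<in> ?S \<longleftrightarrow> fst p \<in> IQ \<and> snd p \<in> IQ \<and> f (?g p) \<noteq> 0" for p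
    unfolding hcomult_def by (cases p) auto
  have gST: "?g ` ?S \<subseteq> ?T" using memS by blast
  have "(\<Sum>p\<in>?S. hcomult E s t f p * G p) = (\<Sum>Z\<in>?T. \<Sum>p\<in>{p \<in> ?S. ?g p = Z}. hcomult E s t f p * G p)"
    by (rule sum.group[OF fS fT gST, symmetric])
  also have "\<dots> = (\<Sum>Z\<in>?T. f Z * (\<Sum>p\<in>pairs Z. G p))"
  proof (rule sum.cong[OF refl])
    fix Z assume Z: "Z \<in> ?T"
    have e: "{p \<in> ?S. ?g p = Z} = pairs Z" unfolding pairs_def using memS Z by auto
    have "(\<Sum>p\<in>pairs Z. hcomult E s t f p * G p) = (\<Sum>p\<in>pairs Z. f Z * G p)"
    proof (rule sum.cong[OF refl])
      fix p assume p: "p \<in> pairs Z"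
      show "hcomult E s t f p * G p = f Z * G p"
        using pairs_mem[OF p] unfolding hcomult_def by (cases p) auto
    qed
    then show "(\<Sum>p\<in>{p \<in> ?S. ?g p = Z}. hcomult E s t f p * G p) = f Z * (\<Sum>p\<in>pairs Z. G p)"
      unfolding e by (simp add: sum_distrib_left)
  qed
  finally show ?thesis .
qed

lemma eu_sum: assumes f: "f \<in> HQ E s t"
  shows "(\<Sum>Z\<in>{Z. f Z \<noteq> 0}. f Z * eu Z X) = hcounit E s t f * hunit E s t X"
proof -
  have "(\<Sum>Z\<in>{Z. f Z \<noteq> 0}. f Z * eu Z X) = (\<Sum>Z\<in>{Z. f Z \<noteq> 0}. if Z = zrep then f zrep * hbasis zrep X else 0)"
    unfolding eu_def by (rule sum.cong) auto
  also have "\<dots> = f zrep * hbasis zrep X" using HQ_D(2)[OF f] by (simp add: sum.delta)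
  finally show ?thesis unfolding hcounit_def hunit_eq canon_zrep .
qed

lemma antipode: assumes fE: "finite E" shows "has_antipode E s t"
  unfolding has_antipode_def
proof (intro exI[of _ Sf] conjI ballI allI)
  fix f assume f: "f \<in> HQ E s t"
  show "Sf f \<in> HQ E s t" using Sf_HQ[OF fE f] .
  fix g assume g: "g \<in> HQ E s t"
  show "Sf (\<lambda>X. f X + g X) = (\<lambda>X. Sf f X + Sf g X)" using Sf_add[OF f g] .
next
  fix c f assume f: "f \<in> HQ E s t"
  show "Sf (hsmult c f) = hsmult c (Sf f)" using Sf_smult[OF f] .
next
  fix f X assume f: "f \<in> HQ E s t"
  have "(\<Sum>p\<in>{p. hcomult E s t f p \<noteq> 0}. hcomult E s t f p * hmult E s t (Sf (hbasis (fst p))) (hbasis (snd p)) X)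
      = (\<Sum>Z\<in>{Z. f Z \<noteq> 0}. f Z * (\<Sum>p\<in>pairs Z. hmult E s t (SL (fst p)) (hbasis (snd p)) X))"
    unfolding Sf_basis by (rule sum_comult[OF fE f])
  also have "\<dots> = (\<Sum>Z\<in>{Z. f Z \<noteq> 0}. f Z * eu Z X)"
  proof -
    have c: "(\<Sum>p\<in>pairs Z. hmult E s t (SL (fst p)) (hbasis (snd p)) X) = eu Z X" for Z
      using fun_cong[OF conv_SL[OF fE, of Z], of X] unfolding conv_def by simp
    show ?thesis by (simp only: c)
  qed
  also have "\<dots> = hcounit E s t f * hunit E s t X" using eu_sum[OF f] .
  finally show "(\<Sum>p\<in>{p. hcomult E s t f p \<noteq> 0}. hcomult E s t f p * hmult E s t (Sf (hbasis (fst p))) (hbasis (snd p)) X)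
      = hcounit E s t f * hunit E s t X" .
  have "(\<Sum>p\<in>{p. hcomult E s t f p \<noteq> 0}. hcomult E s t f p * hmult E s t (hbasis (fst p)) (Sf (hbasis (snd p))) X)
      = (\<Sum>Z\<in>{Z. f Z \<noteq> 0}. f Z * (\<Sum>p\<in>pairs Z. hmult E s t (hbasis (fst p)) (SR (snd p)) X))"
    unfolding Sf_basis SL_SR[OF fE] by (rule sum_comult[OF fE f])
  also have "\<dots> = (\<Sum>Z\<in>{Z. f Z \<noteq> 0}. f Z * eu Z X)"
  proof -
    have c: "(\<Sum>p\<in>pairs Z. hmult E s t (hbasis (fst p)) (SR (snd p)) X) = eu Z X" for Z
      using fun_cong[OF conv_SR[OF fE, of Z], of X] unfolding conv_def by simp
    show ?thesis by (simp only: c)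
  qed
  also have "\<dots> = hcounit E s t f * hunit E s t X" using eu_sum[OF f] .
  finally show "(\<Sum>p\<in>{p. hcomult E s t f p \<noteq> 0}. hcomult E s t f p * hmult E s t (hbasis (fst p)) (Sf (hbasis (snd p))) X)
      = hcounit E s t f * hunit E s t X" .
qed

lemma main_all: assumes fE: "finite E"
  shows "(\<forall>M\<in>IsoQ E s t. \<forall>N\<in>IsoQ E s t.
            hcomult E s t (hmult E s t (hbasis M) (hbasis N))
              = hmult2 E s t (hcomult E s t (hbasis M)) (hcomult E s t (hbasis N)))
         \<and> graded_connected_cocomm_bialgebra E s t
         \<and> has_antipode E s t"
  using comult_mult bialgebra[OF fE] antipode[OF fE] by blast

end

theorem mainTheorem9:
  fixes E :: "'e set" and s t :: "'e \<Rightarrow> 'v::finite"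
  assumes "finite E"
  shows "(\<forall>M\<in>IsoQ E s t. \<forall>N\<in>IsoQ E s t.
            hcomult E s t (hmult E s t (hbasis M) (hbasis N))
              = hmult2 E s t (hcomult E s t (hbasis M)) (hcomult E s t (hbasis N)))
         \<and> graded_connected_cocomm_bialgebra E s t
         \<and> has_antipode E s t"
  using main_all[OF assms] .

end
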